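(* Let $n=n_1+\dots+n_k+\tilde n$ with $n_i\ge1$, $\tilde n\ge 0$, and let $M$ be the corresponding standard Levi subgroup of $\mathrm{SO}_{2n+1}(F)$, identified with $\mathrm{GL}_{n_1}(F)\times\cdots\times\mathrm{GL}_{n_k}(F)\times\mathrm{SO}_{2\tilde n+1}(F)$. Then $M\cap\mathrm{J}^+=\mathrm{GL}_{n_1}(\mathcal{O})\times\cdots\times\mathrm{GL}_{n_k}(\mathcal{O})\times\mathrm{J}^+_{2\tilde n+1}$, where $\mathrm{J}^+_{2\tilde n+1}$ is the paramodular subgroup of $\mathrm{SO}_{2\tilde n+1}(F)$.
   Context: $F$ non-archimedean local field of characteristic $0$, ring of integers $\mathcal{O}$, $\mathfrak{p}=\varpi\mathcal{O}$, residue field $k$. $V_n$ has basis $\mathcal{B}_0=(e_1,\dots,e_n,v_0,f_n,\dots,f_1)$ with $\langle e_i,f_j\rangle=\delta_{ij}$, $\langle v_0,v_0\rangle=2$, other pairings $0$, $q(x)=\langle x,x\rangle/2$, $\mathrm{SO}_{2n+1}(F)=\mathrm{SO}(V_n,q)$. The Levi $M$ consists of elements whose matrix in $\mathcal{B}_0$ is block diagonal $\mathrm{diag}(C_1,\dots,C_k,D,{}^\tau C_k^{-1},\dots,{}^\tau C_1^{-1})$ with $C_i\in\mathrm{GL}_{n_i}(F)$, ${}^\tau$ the transpose with respect to the antidiagonal, and $D\in\mathrm{SO}(V_{\tilde n})$ where $V_{\tilde n}$ is spanned by $e_{n'+1},\dots,e_n,v_0,f_n,\dots,f_{n'+1}$,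 $n'=n_1+\dots+n_k$; this gives the identification. Paramodular subgroup, defined for any such space with basis $(e_1,\dots,e_m,v_0,f_m,\dots,f_1)$: $L=\oplus\mathcal{O}e_i\oplus\oplus\varpi\mathcal{O}f_i\oplus\varpi\mathcal{O}v_0$, $\mathrm{J}=\{g\in\mathrm{SO}:g(L)=L\}$; for $g\in\mathrm{J}$, reducing its action on $L$ modulo $\mathfrak{p}$ and passing to the quotient of $L/\mathfrak{p}L$ by the kernel (spanned by the image of $\varpi v_0$) of the form induced by $q/\varpi$ gives $\bar g$ in a $2m$-dimensional orthogonal group; $\alpha(g)=\det\bar g$ if $\mathrm{char}\,k\ne2$, the Dickson–Dieudonné determinant of $\bar g$ if $\mathrm{char}\,k=2$; $\mathrm{J}^+=\ker\alpha$. $\mathrm{J}^+=\mathrm{J}^+_{2n+1}$ for $V_n$ and $\mathrm{J}^+_{2\tilde n+1}$ for $V_{\tilde n}$. *)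

theory Defs
  imports "Jordan_Normal_Form.DL_Rank" "Jordan_Normal_Form.Determinant"
begin

text \<open>F is a type of class field_char_0, carrying a normalized discrete valuation
  v (its value at 0 is irrelevant).\<close>

definition intO :: "('a::field \<Rightarrow> int) \<Rightarrow> 'a set" where
  "intO v = {x. x = 0 \<or> 0 \<le> v x}"

definition maxP :: "('a::field \<Rightarrow> int) \<Rightarrow> 'a set" where
  "maxP v = {x. x = 0 \<or> 1 \<le> v x}"

definition nonarch_local_field :: "('a::field_char_0 \<Rightarrow> int) \<Rightarrow> ('a \<Rightarrow> 'k::field) \<Rightarrow> bool" where
  "nonarch_local_field v red \<longleftrightarrow>
     (\<forall>x y. x \<noteq> 0 \<longrightarrow> y \<noteq> 0 \<longrightarrow> v (x * y) = v x + v y) \<and>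
     (\<forall>x y. x \<noteq> 0 \<longrightarrow> y \<noteq> 0 \<longrightarrow> x + y \<noteq> 0 \<longrightarrow> min (v x) (v y) \<le> v (x + y)) \<and>
     (\<exists>x. x \<noteq> 0 \<and> v x = 1) \<and>
     \<comment> \<open>completeness with respect to the valuation\<close>
     (\<forall>s :: nat \<Rightarrow> 'a.
        (\<forall>N::int. \<exists>M. \<forall>i\<ge>M. \<forall>j\<ge>M. s i = s j \<or> N \<le> v (s i - s j)) \<longrightarrow>
        (\<exists>l. \<forall>N::int. \<exists>M. \<forall>i\<ge>M. s i = l \<or> N \<le> v (s i - l))) \<and>
     \<comment> \<open>red : O \<rightarrow> k is a surjective ring homomorphism with kernel p\<close>
     (\<forall>x\<in>intO v. \<forall>y\<in>intO v. red (x + y) = red x + red y \<and> red (x * y) = red x * red y) \<and>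
     red 1 = 1 \<and>
     red ` intO v = UNIV \<and>
     (\<forall>x\<in>intO v. red x = 0 \<longleftrightarrow> x \<in> maxP v) \<and>
     \<comment> \<open>finite residue field\<close>
     finite (UNIV :: 'k set)"

text \<open>Basis order (e_1,...,e_m,v_0,f_m,...,f_1): e_i has index i-1, v_0 index m,
  f_i index 2m+1-i.  Gram matrix of the bilinear form.\<close>

definition gram :: "nat \<Rightarrow> 'a::field mat" where
  "gram m = mat (2*m+1) (2*m+1)
     (\<lambda>(i,j). if i + j = 2*m then (if i = m then 2 else 1) else 0)"

definition SO :: "nat \<Rightarrow> 'a::field_char_0 mat set" where
  "SO m = {g \<in> carrier_mat (2*m+1) (2*m+1).
             transpose_mat g * gram m * g = gram m \<and> det g = 1}"

definition latt :: "('a::field \<Rightarrow> int) \<Rightarrow> 'a \<Rightarrow> nat \<Rightarrow> 'a vec set" where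
  "latt v w m = {x \<in> carrier_vec (2*m+1).
      (\<forall>i<m. x $ i \<in> intO v) \<and>
      (\<forall>i. m \<le> i \<longrightarrow> i < 2*m+1 \<longrightarrow> x $ i \<in> {w * y | y. y \<in> intO v})}"

definition paramodular :: "('a::field_char_0 \<Rightarrow> int) \<Rightarrow> 'a \<Rightarrow> nat \<Rightarrow> 'a mat set" where
  "paramodular v w m = {g \<in> SO m. (\<lambda>x. g *\<^sub>v x) ` latt v w m = latt v w m}"

text \<open>Matrix of g in the O-basis (e_1,...,e_m, w v_0, w f_m, ..., w f_1) of L.\<close>

definition latt_coords :: "'a::field \<Rightarrow> nat \<Rightarrow> 'a mat \<Rightarrow> 'a mat" where
  "latt_coords w m g = mat (2*m+1) (2*m+1)
     (\<lambda>(i,j). g $$ (i,j) * (if j < m then 1 else w) / (if i < m then 1 else w))"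

text \<open>The induced element gbar of the 2m-dimensional orthogonal group over k:
  reduce mod p the action on L, then pass to the quotient by the line spanned by
  the image of w v_0 (index m).\<close>

definition gbar :: "('a::field \<Rightarrow> 'k::field) \<Rightarrow> 'a \<Rightarrow> nat \<Rightarrow> 'a mat \<Rightarrow> 'k mat" where
  "gbar red w m g = map_mat red (mat_delete (latt_coords w m g) m m)"

text \<open>J^+ = kernel of alpha: if char k \<noteq> 2, alpha(g) = det gbar; if char k = 2,
  alpha(g) is the Dickson invariant rank(gbar - 1) mod 2.\<close>

definition paramodular_plus ::
  "('a::field_char_0 \<Rightarrow> int) \<Rightarrow> 'a \<Rightarrow> ('a \<Rightarrow> 'k::field) \<Rightarrow> nat \<Rightarrow> 'a mat set" where
  "paramodular_plus v w red m = {g \<in> paramodular v w m.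
     if (2::'k) \<noteq> 0 then det (gbar red w m g) = 1
     else even (vec_space.rank (2*m) (gbar red w m g - 1\<^sub>m (2*m)))}"

definition mat_inv :: "'a::field mat \<Rightarrow> 'a mat" where
  "mat_inv A = (SOME B. B \<in> carrier_mat (dim_row A) (dim_row A) \<and>
                        A * B = 1\<^sub>m (dim_row A) \<and> B * A = 1\<^sub>m (dim_row A))"

definition tau :: "'a mat \<Rightarrow> 'a mat" where
  "tau A = mat (dim_col A) (dim_row A) (\<lambda>(i,j). A $$ (dim_row A - 1 - j, dim_col A - 1 - i))"

definition blockdiag3 :: "'a::zero mat \<Rightarrow> 'a mat \<Rightarrow> 'a mat \<Rightarrow> 'a mat" where
  "blockdiag3 A X B = four_block_mat A (0\<^sub>m (dim_row A) (dim_col X + dim_col B))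
      (0\<^sub>m (dim_row X + dim_row B) (dim_col A))
      (four_block_mat X (0\<^sub>m (dim_row X) (dim_col B)) (0\<^sub>m (dim_row B) (dim_col X)) B)"

fun levi_embed :: "'a::field mat list \<Rightarrow> 'a mat \<Rightarrow> 'a mat" where
  "levi_embed [] D = D"
| "levi_embed (C # Cs) D = blockdiag3 C (levi_embed Cs D) (tau (mat_inv C))"

definition GL_F :: "nat \<Rightarrow> 'a::field mat set" where
  "GL_F n = {C \<in> carrier_mat n n. invertible_mat C}"

definition GL_O :: "('a::field \<Rightarrow> int) \<Rightarrow> nat \<Rightarrow> 'a mat set" where
  "GL_O v n = {C \<in> GL_F n. (\<forall>i<n. \<forall>j<n. C $$ (i,j) \<in> intO v \<and> mat_inv C $$ (i,j) \<in> intO v)}"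

definition levi :: "nat list \<Rightarrow> nat \<Rightarrow> 'a::field_char_0 mat set" where
  "levi ns nt = {levi_embed Cs D | Cs D. list_all2 (\<lambda>C ni. C \<in> GL_F ni) Cs ns \<and> D \<in> SO nt}"

end

theory Submission
  imports Defs "Jordan_Normal_Form.Matrix_Kernel" "Jordan_Normal_Form.Gauss_Jordan_Elimination"
begin

lemma rank_nullity_mat:
  fixes A :: "'a::field mat"
  assumes A: "A \<in> carrier_mat nr nc"
  shows "vec_space.rank nr A + kernel_dim A = nc"
proof -
  interpret V: vec_space "TYPE('a)" nc .
  interpret W: vec_space "TYPE('a)" nr .
  interpret K: kernel nr nc A by (unfold_locales, rule A)
  interpret L: linear_map class_ring "module_vec TYPE('a) nc" "module_vec TYPE('a) nr" "\<lambda>x. A *\<^sub>v x"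
  proof (unfold_locales)
    show "(\<lambda>x. A *\<^sub>v x) \<in> LinearCombinations.module_hom class_ring (module_vec TYPE('a) nc) (module_vec TYPE('a) nr)"
      using A by (auto simp: LinearCombinations.module_hom_def module_vec_def mult_add_distrib_mat_vec mult_mat_vec)
  qed
  have im: "L.imT = W.col_space A"
    unfolding W.col_space_eq[OF A] LinearCombinations.mod_hom.im_def[OF L.mod_hom_axioms]
    using A by (auto simp: module_vec_def)
  have ker: "L.kerT = mat_kernel A"
    unfolding LinearCombinations.mod_hom.ker_def[OF L.mod_hom_axioms] mat_kernel_def
    using A by (auto simp: module_vec_def)
  have "vectorspace.dim class_ring (W.vs L.imT) + vectorspace.dim class_ring (V.vs L.kerT) = V.dim"
    by (rule L.rank_nullity_main(1)) simp
  then show ?thesis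
    unfolding im ker W.rank_def W.col_space_def V.dim_is_n K.kernel_dim by simp
qed

lemma kernel_dim_cong: "mat_kernel A = mat_kernel B \<Longrightarrow> dim_col A = dim_col B \<Longrightarrow> kernel_dim A = kernel_dim B"
  unfolding kernel_dim_def by simp

lemma (in vec_space) pivot_indpt:
  assumes S: "S \<subseteq> carrier_vec n"
    and piv: "\<And>u. u \<in> S \<Longrightarrow> \<exists>j<n. u $ j = 1 \<and> (\<forall>u'\<in>S. u' \<noteq> u \<longrightarrow> u' $ j = 0)"
  shows "lin_indpt S"
proof
  assume "lin_dep S"
  then obtain B a u where fin: "finite B" and BS: "B \<subseteq> S" and lc: "lincomb a B = 0\<^sub>v n"
    and uB: "u \<in> B" and au: "a u \<noteq> 0"
    unfolding lin_dep_def by auto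
  obtain j where j: "j < n" "u $ j = 1" and oth: "\<forall>u'\<in>S. u' \<noteq> u \<longrightarrow> u' $ j = 0"
    using piv[of u] uB BS by auto
  have Bc: "B \<subseteq> carrier_vec n" using BS S by auto
  have "lincomb a B $ j = (\<Sum>x\<in>B. a x * x $ j)"
    by (rule lincomb_index[OF j(1) Bc])
  also have "\<dots> = (\<Sum>x\<in>B. if x = u then a u else 0)"
    by (rule sum.cong[OF refl], insert oth BS j, auto)
  also have "\<dots> = a u" using fin uB by simp
  finally have "a u = 0" using lc j by simp
  thus False using au by simp
qed

lemma rank_le_rank_transpose:
  fixes A :: "'a::field mat"
  assumes A: "A \<in> carrier_mat nr nc"
  shows "vec_space.rank nr A \<le> vec_space.rank nc (transpose_mat A)"
proof -
  define R where "R = gauss_jordan_single A"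
  note gj = gauss_jordan_single[OF A R_def[symmetric]]
  have R: "R \<in> carrier_mat nr nc" using gj(2) .
  obtain P Q where RPA: "R = P*A" and P: "P \<in> carrier_mat nr nr" and Q: "Q \<in> carrier_mat nr nr"
    and PQ: "P*Q = 1\<^sub>m nr" and QP: "Q*P = 1\<^sub>m nr" using gj(4) by blast
  from gj(3) obtain f where piv: "pivot_fun R f nc" unfolding row_echelon_form_def using R by auto
  have dR: "dim_row R = nr" "dim_col R = nc" using R by auto
  note pd = pivot_funD[OF dR(1) piv]
  define Z where "Z = {i. i < nr \<and> row R i \<noteq> 0\<^sub>v nc}"
  have kA: "kernel_dim R = kernel_dim A"
    by (rule kernel_dim_cong, unfold RPA, rule mat_kernel_mult_eq[OF A P Q QP], insert P A, simp)
  interpret KR: kernel nr nc R by (unfold_locales, rule R)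
  have kR: "kernel_dim R = nc - card Z"
    unfolding KR.kernel_dim Z_def using find_base_vectors(6)[OF gj(3) R] .
  have rA: "vec_space.rank nr A \<le> card Z" using rank_nullity_mat[OF A] kA kR by linarith
  have Zf: "f i < nc" "R $$ (i, f i) = 1" "\<And>i'. i' < nr \<Longrightarrow> i' \<noteq> i \<Longrightarrow> R $$ (i', f i) = 0"
    if "i \<in> Z" for i
  proof -
    from that have i: "i < nr" and nz: "row R i \<noteq> 0\<^sub>v nc" unfolding Z_def by auto
    show fi: "f i < nc"
    proof (rule ccontr)
      assume "\<not> f i < nc"
      hence "\<forall>j<nc. R $$ (i,j) = 0" using pd(2)[OF i] by auto
      hence "row R i = 0\<^sub>v nc" using i dR by (intro eq_vecI, auto)
      thus False using nz by auto
    qed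
    show "R $$ (i, f i) = 1" using pd(4)[OF i fi] .
    show "\<And>i'. i' < nr \<Longrightarrow> i' \<noteq> i \<Longrightarrow> R $$ (i', f i) = 0" using pd(5)[OF i fi] by auto
  qed
  have inj: "inj_on (row R) Z"
  proof (rule inj_onI)
    fix i i' assume i: "i \<in> Z" and i': "i' \<in> Z" and eq: "row R i = row R i'"
    have "row R i $ f i = row R i' $ f i" using eq by simp
    hence "R $$ (i, f i) = R $$ (i', f i)" using i i' Zf(1)[OF i] dR unfolding Z_def by auto
    thus "i = i'" using Zf[OF i] i' unfolding Z_def by (metis zero_neq_one mem_Collect_eq)
  qed
  interpret VC: vec_space "TYPE('a)" nc .
  have RT: "transpose_mat R \<in> carrier_mat nc nr" using R by auto
  have sub: "row R ` Z \<subseteq> set (cols (transpose_mat R))"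
    unfolding cols_transpose Z_def rows_def using dR by auto
  have indpt: "LinearCombinations.module.lin_indpt class_ring (module_vec TYPE('a) nc) (row R ` Z)"
  proof (rule vec_space.pivot_indpt)
    show "row R ` Z \<subseteq> carrier_vec nc" using dR unfolding Z_def by auto
    fix u assume "u \<in> row R ` Z"
    then obtain i where iZ: "i \<in> Z" and ui: "u = row R i" by auto
    show "\<exists>j<nc. u $ j = 1 \<and> (\<forall>u'\<in>row R ` Z. u' \<noteq> u \<longrightarrow> u' $ j = 0)"
    proof (intro exI[of _ "f i"] conjI ballI impI)
      show "f i < nc" using Zf(1)[OF iZ] .
      show "u $ f i = 1" using Zf[OF iZ] ui dR iZ unfolding Z_def by auto
      fix u' assume "u' \<in> row R ` Z" "u' \<noteq> u"
      then obtain i' where i'Z: "i' \<in> Z" and xi: "u' = row R i'" and "i' \<noteq> i" using ui by auto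
      then show "u' $ f i = 0" using Zf(3)[OF iZ] Zf(1)[OF iZ] dR unfolding Z_def by auto
    qed
  qed
  have cZ: "card (row R ` Z) = card Z" using card_image[OF inj] .
  have rRT: "card Z \<le> vec_space.rank nc (transpose_mat R)"
    using vec_space.rank_ge_card_indpt[OF RT sub indpt] cZ by simp
  have AQR: "A = Q * R" unfolding RPA using A P Q QP by (simp add: assoc_mult_mat[symmetric])
  have AT: "transpose_mat A = transpose_mat R * transpose_mat Q"
    unfolding AQR using transpose_mult[OF Q R] .
  have QTPT: "transpose_mat Q * transpose_mat P = 1\<^sub>m nr"
    using transpose_mult[OF P Q] PQ by simp
  have kd: "kernel_dim (transpose_mat R * transpose_mat Q) = kernel_dim (transpose_mat R)"
    using mat_kernel_dim_mult_eq_right[OF RT _ _ QTPT] P Q RT unfolding kernel_dim_def by auto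
  have "vec_space.rank nc (transpose_mat A) = vec_space.rank nc (transpose_mat R)"
  proof -
    have c1: "transpose_mat A \<in> carrier_mat nc nr" using A by simp
    have e1: "vec_space.rank nc (transpose_mat A) + kernel_dim (transpose_mat A) = nr"
      by (rule rank_nullity_mat[OF c1])
    have e2: "vec_space.rank nc (transpose_mat R) + kernel_dim (transpose_mat R) = nr"
      by (rule rank_nullity_mat[OF RT])
    have "kernel_dim (transpose_mat A) = kernel_dim (transpose_mat R)" using kd AT by simp
    thus ?thesis using e1 e2 by linarith
  qed
  thus ?thesis using rA rRT by simp
qed

lemma rank_transpose:
  fixes A :: "'a::field mat"
  assumes A: "A \<in> carrier_mat nr nc"
  shows "vec_space.rank nc (transpose_mat A) = vec_space.rank nr A"
  using rank_le_rank_transpose[OF A] rank_le_rank_transpose[of "transpose_mat A" nc nr] A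
  by auto

lemma kernel_dim_transpose:
  fixes A :: "'a::field mat"
  assumes A: "A \<in> carrier_mat n n"
  shows "kernel_dim (transpose_mat A) = kernel_dim A"
  using rank_transpose[OF A] rank_nullity_mat[OF A] rank_nullity_mat[of "transpose_mat A" n n] A
  by auto

lemma bd3_dims[simp]:
  "dim_row (blockdiag3 A X B) = dim_row A + (dim_row X + dim_row B)"
  "dim_col (blockdiag3 A X B) = dim_col A + (dim_col X + dim_col B)"
  unfolding blockdiag3_def by auto
lemma bd3_carrier:
  assumes "A \<in> carrier_mat a a" "X \<in> carrier_mat b b" "B \<in> carrier_mat c c"
  shows "blockdiag3 A X B \<in> carrier_mat (a + (b + c)) (a + (b + c))"
  apply (rule carrier_matI) using assms by auto
lemma bd3_index:
  assumes A: "A \<in> carrier_mat a a" and X: "X \<in> carrier_mat b b" and B: "B \<in> carrier_mat c c"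
    and i: "i < a + (b + c)" and j: "j < a + (b + c)"
  shows "blockdiag3 A X B $$ (i,j) =
    (if i < a then (if j < a then A $$ (i,j) else 0)
     else if i < a + b then (if a \<le> j \<and> j < a + b then X $$ (i - a, j - a) else 0)
     else (if a + b \<le> j then B $$ (i - a - b, j - a - b) else 0))"
proof -
  have dA: "dim_row A = a" "dim_col A = a" using A by auto
  have dX: "dim_row X = b" "dim_col X = b" using X by auto
  have dB: "dim_row B = c" "dim_col B = c" using B by auto
  have e: "blockdiag3 A X B $$ (i,j) = (if i < a then if j < a then A $$ (i,j) else 0
      else if j < a then 0 else four_block_mat X (0\<^sub>m b c) (0\<^sub>m c b) B $$ (i - a, j - a))"
    unfolding blockdiag3_def using i j dA dX dB by (simp del: index_mat_four_block(1) add: index_mat_four_block(1)[of i _ _ j])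
  show ?thesis
  proof (cases "i < a")
    case True then show ?thesis using e by simp
  next
    case ia: False
    show ?thesis
    proof (cases "j < a")
      case True then show ?thesis using e ia by simp
    next
      case ja: False
      have i': "i - a < b + c" "j - a < b + c" using i j ia ja by auto
      have "four_block_mat X (0\<^sub>m b c) (0\<^sub>m c b) B $$ (i - a, j - a) =
        (if i - a < b then if j - a < b then X $$ (i - a, j - a) else 0
         else if j - a < b then 0 else B $$ (i - a - b, j - a - b))"
        using i' dX dB by simp
      then show ?thesis using e ia ja by (auto simp: diff_diff_add)
    qed
  qed
qed


lemma bd3_eqI:
  assumes A: "A \<in> carrier_mat a a" and X: "X \<in> carrier_mat b b" and B: "B \<in> carrier_mat c c"
    and M: "M \<in> carrier_mat (a + (b + c)) (a + (b + c))"
    and e: "\<And>i j. i < a + (b + c) \<Longrightarrow> j < a + (b + c) \<Longrightarrow> M $$ (i,j) =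
    (if i < a then (if j < a then A $$ (i,j) else 0)
     else if i < a + b then (if a \<le> j \<and> j < a + b then X $$ (i - a, j - a) else 0)
     else (if a + b \<le> j then B $$ (i - a - b, j - a - b) else 0))"
  shows "M = blockdiag3 A X B"
  by (rule eq_matI, subst bd3_index[OF A X B], insert M A X B e, auto)

lemma bd3_mult:
  assumes A: "A \<in> carrier_mat a a" and X: "X \<in> carrier_mat b b" and B: "B \<in> carrier_mat c c"
   and A': "A' \<in> carrier_mat a a" and X': "X' \<in> carrier_mat b b" and B': "B' \<in> carrier_mat c c"
  shows "blockdiag3 A X B * blockdiag3 A' X' B' = blockdiag3 (A * A') (X * X') (B * B')"
proof -
  have i: "four_block_mat X (0\<^sub>m b c) (0\<^sub>m c b) B * four_block_mat X' (0\<^sub>m b c) (0\<^sub>m c b) B'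
     = four_block_mat (X * X') (0\<^sub>m b c) (0\<^sub>m c b) (B * B')"
    by (subst mult_four_block_mat[OF X _ _ B X' _ _ B'], insert X B X' B', auto)
  have XB: "four_block_mat X (0\<^sub>m b c) (0\<^sub>m c b) B \<in> carrier_mat (b+c) (b+c)" using X B by auto
  have XB': "four_block_mat X' (0\<^sub>m b c) (0\<^sub>m c b) B' \<in> carrier_mat (b+c) (b+c)" using X' B' by auto
  have dX: "dim_row X = b" "dim_col X = b" "dim_row B = c" "dim_col B = c" using X B by auto
  have dX': "dim_row X' = b" "dim_col X' = b" "dim_row B' = c" "dim_col B' = c" using X' B' by auto
  have z1: "0\<^sub>m a (b + c) \<in> carrier_mat a (b+c)" "0\<^sub>m (b + c) a \<in> carrier_mat (b+c) a" by auto
  have dA: "dim_row A = a" "dim_col A = a" "dim_row A' = a" "dim_col A' = a" using A A' by auto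
  have XBp: "four_block_mat (X * X') (0\<^sub>m b c) (0\<^sub>m c b) (B * B') \<in> carrier_mat (b+c) (b+c)"
    using X X' B B' by auto
  show ?thesis unfolding blockdiag3_def
    apply (simp only: dX dX' dA index_mult_mat(2,3))
    apply (subst mult_four_block_mat[OF A z1(1) z1(2) XB A' z1(1) z1(2) XB'])
    apply (rule cong_four_block_mat)
    using A A' XB XB' i
    by (auto simp: left_mult_zero_mat[OF XB'] right_mult_zero_mat[OF XB] left_mult_zero_mat[OF A'] right_mult_zero_mat[OF A]
       left_add_zero_mat[OF XBp])
qed


lemma bd3_transpose:
  assumes A: "A \<in> carrier_mat a a" and X: "X \<in> carrier_mat b b" and B: "B \<in> carrier_mat c c"
  shows "transpose_mat (blockdiag3 A X B) = blockdiag3 (transpose_mat A) (transpose_mat X) (transpose_mat B)"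
  by (rule bd3_eqI, insert A X B, auto simp: bd3_index)

lemma bd3_one:
  "1\<^sub>m (a + (b + c)) = blockdiag3 (1\<^sub>m a) (1\<^sub>m b) (1\<^sub>m c)"
  by (rule bd3_eqI, auto)

lemma bd3_minus:
  fixes A :: "'a::ab_group_add mat"
  assumes A: "A \<in> carrier_mat a a" and X: "X \<in> carrier_mat b b" and B: "B \<in> carrier_mat c c"
   and A': "A' \<in> carrier_mat a a" and X': "X' \<in> carrier_mat b b" and B': "B' \<in> carrier_mat c c"
  shows "blockdiag3 A X B - blockdiag3 A' X' B' = blockdiag3 (A - A') (X - X') (B - B')"
  by (rule bd3_eqI, insert A X B A' X' B', auto simp: bd3_index)

lemma bd3_map:
  assumes A: "A \<in> carrier_mat a a" and X: "X \<in> carrier_mat b b" and B: "B \<in> carrier_mat c c"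
   and f0: "f 0 = 0"
  shows "map_mat f (blockdiag3 A X B) = blockdiag3 (map_mat f A) (map_mat f X) (map_mat f B)"
  by (rule bd3_eqI, insert A X B f0, auto simp: bd3_index)

lemma bd3_det:
  fixes A :: "'a::idom mat"
  assumes A: "A \<in> carrier_mat a a" and X: "X \<in> carrier_mat b b" and B: "B \<in> carrier_mat c c"
  shows "det (blockdiag3 A X B) = det A * det X * det B"
proof -
  have "det (four_block_mat X (0\<^sub>m b c) (0\<^sub>m c b) B) = det X * det B"
    by (rule det_four_block_mat_lower_left_zero[OF X _ refl B], auto)
  moreover have "det (blockdiag3 A X B) = det A * det (four_block_mat X (0\<^sub>m b c) (0\<^sub>m c b) B)"
  proof -
    have XB: "four_block_mat X (0\<^sub>m b c) (0\<^sub>m c b) B \<in> carrier_mat (b+c) (b+c)" using X B by auto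
    have dA: "dim_row A = a" "dim_col A = a" "dim_row X = b" "dim_col X = b" "dim_row B = c" "dim_col B = c" using A X B by auto
    show ?thesis unfolding blockdiag3_def dA
      by (rule det_four_block_mat_lower_left_zero[OF A _ refl XB], auto)
  qed
  ultimately show ?thesis by simp
qed

lemma bd3_kernel_dim:
  fixes A :: "'a::field mat"
  assumes A: "A \<in> carrier_mat a a" and X: "X \<in> carrier_mat b b" and B: "B \<in> carrier_mat c c"
  shows "kernel_dim (blockdiag3 A X B) = kernel_dim A + kernel_dim X + kernel_dim B"
proof -
  have XB: "four_block_mat X (0\<^sub>m b c) (0\<^sub>m c b) B \<in> carrier_mat (b+c) (b+c)" using X B by auto
  have 1: "kernel.dim (b+c) (four_block_mat X (0\<^sub>m b c) (0\<^sub>m c b) B) = kernel.dim b X + kernel.dim c B"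
    by (rule kernel_four_block_0_mat[OF refl X B])
  have 2: "kernel.dim (a+(b+c)) (blockdiag3 A X B) = kernel.dim a A + kernel.dim (b+c) (four_block_mat X (0\<^sub>m b c) (0\<^sub>m c b) B)"
    by (rule kernel_four_block_0_mat[OF _ A XB], insert A X B, simp add: blockdiag3_def)
  show ?thesis using 1 2 A X B unfolding kernel_dim_def by auto
qed

definition pm :: "nat \<Rightarrow> (nat \<Rightarrow> nat) \<Rightarrow> 'a::{zero,one} mat" where
  "pm n \<sigma> = mat n n (\<lambda>(i,j). if j = \<sigma> i then 1 else 0)"

lemma pm_carrier[simp]: "pm n \<sigma> \<in> carrier_mat n n"
  unfolding pm_def by simp

lemma pm_dims[simp]: "dim_row (pm n \<sigma>) = n" "dim_col (pm n \<sigma>) = n"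
  unfolding pm_def by simp_all

lemma pm_index[simp]: "i < n \<Longrightarrow> j < n \<Longrightarrow> pm n \<sigma> $$ (i,j) = (if j = \<sigma> i then 1 else 0)"
  unfolding pm_def by simp

lemma pm_mult_left:
  fixes M :: "'a::semiring_1 mat"
  assumes M: "M \<in> carrier_mat n nc" and s: "\<And>i. i < n \<Longrightarrow> \<sigma> i < n"
  shows "pm n \<sigma> * M = mat n nc (\<lambda>(i,j). M $$ (\<sigma> i, j))"
proof (rule eq_matI)
  fix i j assume i: "i < dim_row (mat n nc (\<lambda>(i,j). M $$ (\<sigma> i, j)))" and j: "j < dim_col (mat n nc (\<lambda>(i,j). M $$ (\<sigma> i, j)))"
  hence i: "i < n" and j: "j < nc" by auto
  have "(pm n \<sigma> * M) $$ (i,j) = (\<Sum>a = 0..<n. (if a = \<sigma> i then 1 else 0) * M $$ (a, j))"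
    using M i j by (simp add: scalar_prod_def)
  also have "\<dots> = (\<Sum>a = 0..<n. if a = \<sigma> i then M $$ (a, j) else 0)"
    by (rule sum.cong, auto)
  also have "\<dots> = M $$ (\<sigma> i, j)" using s[OF i] by simp
  finally show "(pm n \<sigma> * M) $$ (i,j) = mat n nc (\<lambda>(i,j). M $$ (\<sigma> i, j)) $$ (i,j)" using i j by simp
qed (insert M, auto)

lemma pm_mult_right:
  fixes M :: "'a::semiring_1 mat"
  assumes M: "M \<in> carrier_mat nr n" and s: "\<And>i. i < n \<Longrightarrow> \<sigma> i < n"
    and inv: "\<And>i. i < n \<Longrightarrow> \<sigma> (\<sigma> i) = i"
  shows "M * pm n \<sigma> = mat nr n (\<lambda>(i,j). M $$ (i, \<sigma> j))"
proof (rule eq_matI)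
  fix i j assume i: "i < dim_row (mat nr n (\<lambda>(i,j). M $$ (i, \<sigma> j)))" and j: "j < dim_col (mat nr n (\<lambda>(i,j). M $$ (i, \<sigma> j)))"
  hence i: "i < nr" and j: "j < n" by auto
  have "(M * pm n \<sigma>) $$ (i,j) = (\<Sum>a = 0..<n. M $$ (i, a) * (if j = \<sigma> a then 1 else 0))"
    using M i j by (simp add: scalar_prod_def)
  also have "\<dots> = (\<Sum>a = 0..<n. if a = \<sigma> j then M $$ (i, a) else 0)"
    by (rule sum.cong[OF refl], insert s inv j, auto)
  also have "\<dots> = M $$ (i, \<sigma> j)" using s[OF j] by simp
  finally show "(M * pm n \<sigma>) $$ (i,j) = mat nr n (\<lambda>(i,j). M $$ (i, \<sigma> j)) $$ (i,j)" using i j by simp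
qed (insert M, auto)

lemma pm_transpose:
  assumes s: "\<And>i. i < n \<Longrightarrow> \<sigma> i < n" and inv: "\<And>i. i < n \<Longrightarrow> \<sigma> (\<sigma> i) = i"
  shows "transpose_mat (pm n \<sigma>) = (pm n \<sigma> :: 'a::{zero,one} mat)"
  by (rule eq_matI, insert s inv, auto)

lemma pm_pm:
  assumes s: "\<And>i. i < n \<Longrightarrow> \<sigma> i < n" and inv: "\<And>i. i < n \<Longrightarrow> \<sigma> (\<sigma> i) = i"
  shows "pm n \<sigma> * pm n \<sigma> = (1\<^sub>m n :: 'a::semiring_1 mat)"
  by (subst pm_mult_left[OF pm_carrier s], simp, rule eq_matI, insert s inv, auto)

definition Jm :: "nat \<Rightarrow> 'a::{zero,one} mat" where "Jm n = pm n (\<lambda>i. n - 1 - i)"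

lemma Jm_carrier[simp]: "Jm n \<in> carrier_mat n n" unfolding Jm_def by simp


lemma Jm_transpose: "transpose_mat (Jm n) = (Jm n :: 'a::{zero,one} mat)"
  unfolding Jm_def by (rule pm_transpose, auto)

lemma Jm_Jm: "Jm n * Jm n = (1\<^sub>m n :: 'a::semiring_1 mat)"
  unfolding Jm_def by (rule pm_pm, auto)

lemma Jm_left: "(M :: 'a::semiring_1 mat) \<in> carrier_mat n nc \<Longrightarrow> Jm n * M = mat n nc (\<lambda>(i,j). M $$ (n - 1 - i, j))"
  unfolding Jm_def by (rule pm_mult_left, auto)

lemma Jm_right: "(M :: 'a::semiring_1 mat) \<in> carrier_mat nr n \<Longrightarrow> M * Jm n = mat nr n (\<lambda>(i,j). M $$ (i, n - 1 - j))"
  unfolding Jm_def by (rule pm_mult_right, auto)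

lemma tau_carrier[simp]: "A \<in> carrier_mat n n \<Longrightarrow> tau A \<in> carrier_mat n n"
  unfolding tau_def by auto

lemma tau_index: "A \<in> carrier_mat n n \<Longrightarrow> i < n \<Longrightarrow> j < n \<Longrightarrow> tau A $$ (i,j) = A $$ (n - 1 - j, n - 1 - i)"
  unfolding tau_def by auto

lemma tau_J:
  fixes A :: "'a::semiring_1 mat"
  assumes A: "A \<in> carrier_mat n n"
  shows "tau A = Jm n * transpose_mat A * Jm n"
proof -
  have AT: "transpose_mat A \<in> carrier_mat n n" using A by simp
  have 1: "Jm n * transpose_mat A = mat n n (\<lambda>(i,j). A $$ (j, n - 1 - i))"
    by (subst Jm_left[OF AT], rule eq_matI, insert A, auto)
  have 2: "mat n n (\<lambda>(i,j). A $$ (j, n - 1 - i)) * Jm n = tau A"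
    by (subst Jm_right, force, rule eq_matI, insert A, auto simp: tau_def)
  show ?thesis using 1 2 by simp
qed


lemma tau_dims[simp]: "dim_row (tau A) = dim_col A" "dim_col (tau A) = dim_row A"
  unfolding tau_def by auto

lemma tau_mult:
  fixes A B :: "'a::comm_semiring_1 mat"
  assumes A: "A \<in> carrier_mat n n" and B: "B \<in> carrier_mat n n"
  shows "tau (A * B) = tau B * tau A"
proof (rule eq_matI)
  fix i j assume "i < dim_row (tau B * tau A)" "j < dim_col (tau B * tau A)"
  hence i: "i < n" and j: "j < n" using A B by auto
  have "tau (A * B) $$ (i,j) = (\<Sum>a = 0..<n. A $$ (n - 1 - j, a) * B $$ (a, n - 1 - i))"
    using A B i j by (simp add: tau_index[OF mult_carrier_mat[OF A B]] scalar_prod_def)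
  also have "\<dots> = (\<Sum>a = 0..<n. A $$ (n - 1 - j, n - Suc a) * B $$ (n - Suc a, n - 1 - i))"
    using sum.atLeastLessThan_rev[of "\<lambda>a. A $$ (n - 1 - j, a) * B $$ (a, n - 1 - i)" 0 n] by simp
  also have "\<dots> = (tau B * tau A) $$ (i,j)"
    using A B i j by (auto simp: tau_index scalar_prod_def mult.commute intro!: sum.cong)
  finally show "tau (A * B) $$ (i,j) = (tau B * tau A) $$ (i,j)" .
qed (insert A B, auto)

lemma tau_one: "tau (1\<^sub>m n :: 'a::{zero,one} mat) = 1\<^sub>m n"
  by (rule eq_matI, auto simp: tau_def)

lemma tau_minus:
  fixes A B :: "'a::ab_group_add mat"
  assumes A: "A \<in> carrier_mat n n" and B: "B \<in> carrier_mat n n"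
  shows "tau (A - B) = tau A - tau B"
  by (rule eq_matI, insert A B, auto simp: tau_index tau_index[OF minus_carrier_mat[OF B]])

lemma tau_map: "A \<in> carrier_mat n n \<Longrightarrow> map_mat f (tau A) = tau (map_mat f A)"
  by (rule eq_matI, auto simp: tau_index)

lemma tau_transpose: "A \<in> carrier_mat n n \<Longrightarrow> transpose_mat (tau A) = tau (transpose_mat A)"
  by (rule eq_matI, auto simp: tau_index)

lemma Jm_det: "det (Jm n :: 'a::comm_ring_1 mat) * det (Jm n) = 1"
proof -
  have "det (Jm n * Jm n :: 'a mat) = det (1\<^sub>m n :: 'a mat)" by (simp add: Jm_Jm)
  thus ?thesis using det_mult[OF Jm_carrier Jm_carrier, where 'a='a, of n] by simp
qed

lemma tau_det:
  fixes A :: "'a::comm_ring_1 mat"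
  assumes A: "A \<in> carrier_mat n n"
  shows "det (tau A) = det A"
proof -
  have AT: "transpose_mat A \<in> carrier_mat n n" using A by simp
  have "det (tau A) = det (Jm n :: 'a mat) * det (transpose_mat A) * det (Jm n)"
    unfolding tau_J[OF A] by (simp add: det_mult[OF mult_carrier_mat[OF Jm_carrier AT] Jm_carrier] det_mult[OF Jm_carrier AT])
  also have "\<dots> = det A * (det (Jm n :: 'a mat) * det (Jm n))" using det_transpose[OF A] by (simp add: ac_simps)
  finally show ?thesis using Jm_det[where 'a='a, of n] by simp
qed

lemma kernel_dim_left_inv:
  fixes A :: "'a::field mat"
  assumes A: "A \<in> carrier_mat nr nc" and P: "P \<in> carrier_mat nr nr" and Q: "Q \<in> carrier_mat nr nr"
    and QP: "Q * P = 1\<^sub>m nr"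
  shows "kernel_dim (P * A) = kernel_dim A"
  by (rule kernel_dim_cong[OF mat_kernel_mult_eq[OF A P Q QP]], insert A P, simp)

lemma kernel_dim_right_inv:
  fixes A :: "'a::field mat"
  assumes A: "A \<in> carrier_mat nr nc" and P: "P \<in> carrier_mat nc nc" and Q: "Q \<in> carrier_mat nc nc"
    and PQ: "P * Q = 1\<^sub>m nc"
  shows "kernel_dim (A * P) = kernel_dim A"
  using mat_kernel_dim_mult_eq_right[OF A P Q PQ] A P unfolding kernel_dim_def by simp

lemma tau_kernel_dim:
  fixes A :: "'a::field mat"
  assumes A: "A \<in> carrier_mat n n"
  shows "kernel_dim (tau A) = kernel_dim A"
proof -
  have AT: "transpose_mat A \<in> carrier_mat n n" using A by simp
  have "kernel_dim (tau A) = kernel_dim (Jm n * (transpose_mat A * Jm n))"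
    unfolding tau_J[OF A] by (simp add: assoc_mult_mat[OF Jm_carrier AT Jm_carrier])
  also have "\<dots> = kernel_dim (transpose_mat A * Jm n)"
    by (rule kernel_dim_left_inv[OF mult_carrier_mat[OF AT Jm_carrier] Jm_carrier Jm_carrier Jm_Jm])
  also have "\<dots> = kernel_dim (transpose_mat A)"
    by (rule kernel_dim_right_inv[OF AT Jm_carrier Jm_carrier Jm_Jm])
  also have "\<dots> = kernel_dim A" by (rule kernel_dim_transpose[OF A])
  finally show ?thesis .
qed

lemma kernel_dim_uminus:
  fixes A :: "'a::field mat"
  assumes A: "A \<in> carrier_mat nr nc"
  shows "kernel_dim (- A) = kernel_dim A"
proof -
  have "- A = (- 1\<^sub>m nr) * A" using A by simp
  moreover have "kernel_dim ((- 1\<^sub>m nr) * A) = kernel_dim A"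
    by (rule kernel_dim_left_inv[OF A _ _, of _ "- 1\<^sub>m nr"], auto)
  ultimately show ?thesis by simp
qed


definition swp :: "nat \<Rightarrow> nat \<Rightarrow> nat \<Rightarrow> nat" where
  "swp k b i = (if i < k then i + k + b else if i < k + b then i else i - (k + b))"

lemma swp_lt: "i < k + (b + k) \<Longrightarrow> swp k b i < k + (b + k)"
  unfolding swp_def by auto

lemma swp_inv: "i < k + (b + k) \<Longrightarrow> swp k b (swp k b i) = i"
  unfolding swp_def by auto

lemma gram_index: "i < 2*m+1 \<Longrightarrow> j < 2*m+1 \<Longrightarrow>
   gram m $$ (i,j) = (if i + j = 2*m then (if i = m then 2 else 1) else 0)"
  unfolding gram_def by simp

lemma gram_carrier[simp]: "gram m \<in> carrier_mat (2*m+1) (2*m+1)"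
  unfolding gram_def by simp

lemma gram_decomp:
  "(gram (k + m') :: 'a::field mat) = pm (k + ((2*m'+1) + k)) (swp k (2*m'+1)) * blockdiag3 (Jm k) (gram m') (Jm k)"
proof -
  let ?b = "2*m'+1"
  let ?N = "k + (?b + k)"
  have BD: "blockdiag3 (Jm k) (gram m') (Jm k) \<in> carrier_mat ?N ?N"
    by (rule bd3_carrier[OF Jm_carrier gram_carrier Jm_carrier])
  have N: "2 * (k + m') + 1 = ?N" by simp
  show ?thesis
  proof (subst pm_mult_left[OF BD swp_lt], assumption, rule eq_matI)
    fix i j assume "i < dim_row (mat ?N ?N (\<lambda>(i, j). blockdiag3 (Jm k) (gram m') (Jm k) $$ (swp k ?b i, j)))"
      "j < dim_col (mat ?N ?N (\<lambda>(i, j). blockdiag3 (Jm k) (gram m') (Jm k) $$ (swp k ?b i, j)))"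
    hence i: "i < ?N" and j: "j < ?N" by auto
    have si: "swp k ?b i < ?N" using swp_lt[OF i] .
    have e: "(blockdiag3 (Jm k) (gram m') (Jm k) :: 'a mat) $$ (swp k ?b i, j) =
      (if swp k ?b i < k then (if j < k then Jm k $$ (swp k ?b i, j) else 0)
     else if swp k ?b i < k + ?b then (if k \<le> j \<and> j < k + ?b then (gram m' :: 'a mat) $$ (swp k ?b i - k, j - k) else 0)
     else (if k + ?b \<le> j then (Jm k :: 'a mat) $$ (swp k ?b i - k - ?b, j - k - ?b) else 0))"
      by (rule bd3_index[OF Jm_carrier gram_carrier Jm_carrier si j])
    have g: "(gram (k + m') :: 'a mat) $$ (i,j) = (if i + j = 2*(k+m') then (if i = k + m' then 2 else 1) else 0)"
      by (rule gram_index, insert i j, auto)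
    have "(gram (k + m') :: 'a mat) $$ (i, j) = blockdiag3 (Jm k) (gram m') (Jm k) $$ (swp k ?b i, j)"
    proof (cases "i < k")
      case True
      then show ?thesis unfolding g e using j by (auto simp: swp_def Jm_def)
    next
      case ik: False
      show ?thesis
      proof (cases "i < k + ?b")
        case True
        then show ?thesis unfolding g e using ik j by (auto simp: swp_def gram_index)
      next
        case False
        then show ?thesis unfolding g e using ik i j by (auto simp: swp_def Jm_def)
      qed
    qed
    thus "(gram (k + m') :: 'a mat) $$ (i, j) = mat ?N ?N (\<lambda>(i, j). blockdiag3 (Jm k) (gram m') (Jm k) $$ (swp k ?b i, j)) $$ (i, j)"
      using i j by simp
  qed (auto simp: gram_def)
qed


lemma swap_bd3:
  fixes A :: "'a::semiring_1 mat"
  assumes A: "A \<in> carrier_mat k k" and X: "X \<in> carrier_mat b b" and B: "B \<in> carrier_mat k k"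
  shows "transpose_mat (blockdiag3 A X B) * pm (k+(b+k)) (swp k b) =
         pm (k+(b+k)) (swp k b) * blockdiag3 (transpose_mat B) (transpose_mat X) (transpose_mat A)"
proof -
  let ?N = "k+(b+k)"
  have g: "blockdiag3 A X B \<in> carrier_mat ?N ?N" by (rule bd3_carrier[OF A X B])
  have gT: "transpose_mat (blockdiag3 A X B) \<in> carrier_mat ?N ?N" using g by simp
  have AT: "transpose_mat A \<in> carrier_mat k k" and XT: "transpose_mat X \<in> carrier_mat b b"
    and BT: "transpose_mat B \<in> carrier_mat k k" using A X B by auto
  have g': "blockdiag3 (transpose_mat B) (transpose_mat X) (transpose_mat A) \<in> carrier_mat ?N ?N"
    by (rule bd3_carrier[OF BT XT AT])
  have ent: "blockdiag3 A X B $$ (swp k b j, i) = blockdiag3 (transpose_mat B) (transpose_mat X) (transpose_mat A) $$ (swp k b i, j)"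
    if i: "i < ?N" and j: "j < ?N" for i j
  proof -
    have si: "swp k b i < ?N" and sj: "swp k b j < ?N" using swp_lt i j by auto
    show ?thesis
      unfolding bd3_index[OF A X B sj i] bd3_index[OF BT XT AT si j]
      using i j A X B by (auto simp: swp_def)
  qed
  have sl: "\<And>i. i < ?N \<Longrightarrow> swp k b i < ?N" by (rule swp_lt)
  have si: "\<And>i. i < ?N \<Longrightarrow> swp k b (swp k b i) = i" by (rule swp_inv)
  have l: "transpose_mat (blockdiag3 A X B) * pm ?N (swp k b) = mat ?N ?N (\<lambda>(i,j). transpose_mat (blockdiag3 A X B) $$ (i, swp k b j))"
    by (rule pm_mult_right[OF gT sl si])
  have r: "pm ?N (swp k b) * blockdiag3 (transpose_mat B) (transpose_mat X) (transpose_mat A) =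
     mat ?N ?N (\<lambda>(i,j). blockdiag3 (transpose_mat B) (transpose_mat X) (transpose_mat A) $$ (swp k b i, j))"
    by (rule pm_mult_left[OF g' sl])
  show ?thesis unfolding l r
  proof (rule eq_matI)
    fix i j assume i: "i < dim_row (mat ?N ?N (\<lambda>(i,j). blockdiag3 (transpose_mat B) (transpose_mat X) (transpose_mat A) $$ (swp k b i, j)))"
      and j: "j < dim_col (mat ?N ?N (\<lambda>(i,j). blockdiag3 (transpose_mat B) (transpose_mat X) (transpose_mat A) $$ (swp k b i, j)))"
    hence i: "i < ?N" and j: "j < ?N" by auto
    have "transpose_mat (blockdiag3 A X B) $$ (i, swp k b j) = blockdiag3 A X B $$ (swp k b j, i)"
      by (rule index_transpose_mat(1), insert g sl[OF j] i, auto)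
    thus "mat ?N ?N (\<lambda>(i,j). transpose_mat (blockdiag3 A X B) $$ (i, swp k b j)) $$ (i, j) =
        mat ?N ?N (\<lambda>(i,j). blockdiag3 (transpose_mat B) (transpose_mat X) (transpose_mat A) $$ (swp k b i, j)) $$ (i, j)"
      using ent[OF i j] i j by simp
  qed auto
qed

lemma SO_step:
  fixes A :: "'a::field_char_0 mat"
  assumes A: "A \<in> carrier_mat k k" and A': "A' \<in> carrier_mat k k"
    and AA': "A * A' = 1\<^sub>m k" and A'A: "A' * A = 1\<^sub>m k"
    and X: "X \<in> SO m'"
  shows "blockdiag3 A X (tau A') \<in> SO (k + m')"
proof -
  let ?b = "2*m'+1"
  let ?N = "k+(?b+k)"
  let ?B = "tau A'"
  let ?g = "blockdiag3 A X ?B"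
  let ?P = "pm ?N (swp k ?b) :: 'a mat"
  let ?J = "Jm k :: 'a mat"
  have Xc: "X \<in> carrier_mat ?b ?b" and Xo: "transpose_mat X * gram m' * X = gram m'" and Xd: "det X = 1"
    using X unfolding SO_def by auto
  have B: "?B \<in> carrier_mat k k" using A' by simp
  have g: "?g \<in> carrier_mat ?N ?N" by (rule bd3_carrier[OF A Xc B])
  have N: "2 * (k + m') + 1 = ?N" by simp
  have AT: "transpose_mat A \<in> carrier_mat k k" and XT: "transpose_mat X \<in> carrier_mat ?b ?b"
    and BT: "transpose_mat ?B \<in> carrier_mat k k" and A'T: "transpose_mat A' \<in> carrier_mat k k"
    using A Xc B A' by auto
  have J: "?J \<in> carrier_mat k k" by simp
  have G': "gram m' \<in> carrier_mat ?b ?b" by (rule gram_carrier)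
  have BD: "blockdiag3 ?J (gram m') ?J \<in> carrier_mat ?N ?N" by (rule bd3_carrier[OF J G' J])
  have gT': "blockdiag3 (transpose_mat ?B) (transpose_mat X) (transpose_mat A) \<in> carrier_mat ?N ?N"
    by (rule bd3_carrier[OF BT XT AT])
  have P: "?P \<in> carrier_mat ?N ?N" by simp
  have BTe: "transpose_mat ?B = ?J * A' * ?J"
    unfolding tau_transpose[OF A'] tau_J[OF A'T] by simp
  have e1: "transpose_mat ?B * ?J * A = ?J"
  proof -
    have "transpose_mat ?B * ?J * A = (?J * A' * ?J) * ?J * A" unfolding BTe ..
    also have "(?J * A' * ?J) * ?J = ?J * A' * (?J * ?J)"
      by (rule assoc_mult_mat[OF mult_carrier_mat[OF J A'] J J])
    also have "?J * A' * (?J * ?J) = ?J * A'" using A' J by (simp add: Jm_Jm)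
    also have "?J * A' * A = ?J * (A' * A)" by (rule assoc_mult_mat[OF J A' A])
    also have "\<dots> = ?J" by (simp add: A'A right_mult_one_mat[OF J])
    finally show ?thesis .
  qed
  have e2: "transpose_mat A * ?J * ?B = ?J"
  proof -
    have "transpose_mat A * ?J * ?B = (transpose_mat A * ?J) * ((?J * transpose_mat A') * ?J)"
      unfolding tau_J[OF A'] ..
    also have "\<dots> = (transpose_mat A * ?J) * (?J * transpose_mat A') * ?J"
      by (rule assoc_mult_mat[symmetric, OF mult_carrier_mat[OF AT J] mult_carrier_mat[OF J A'T] J])
    also have "(transpose_mat A * ?J) * (?J * transpose_mat A') = transpose_mat A * (?J * (?J * transpose_mat A'))"
      by (rule assoc_mult_mat[OF AT J mult_carrier_mat[OF J A'T]])
    also have "?J * (?J * transpose_mat A') = transpose_mat A'"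
      by (simp add: assoc_mult_mat[symmetric, OF J J A'T] Jm_Jm left_mult_one_mat[OF A'T])
    also have "transpose_mat A * transpose_mat A' = transpose_mat (A' * A)"
      by (rule transpose_mult[symmetric, OF A' A])
    also have "\<dots> * ?J = ?J" using A'A by (simp add: left_mult_one_mat[OF J])
    finally show ?thesis .
  qed
  have orth: "transpose_mat ?g * gram (k + m') * ?g = gram (k + m')"
  proof -
    have "transpose_mat ?g * gram (k + m') * ?g = (transpose_mat ?g * ?P) * blockdiag3 ?J (gram m') ?J * ?g"
      unfolding gram_decomp[where 'a='a, of k m'] using g P BD
      by (simp add: assoc_mult_mat[of _ ?N ?N _ ?N _ ?N])
    also have "\<dots> = ?P * (blockdiag3 (transpose_mat ?B) (transpose_mat X) (transpose_mat A) * blockdiag3 ?J (gram m') ?J * ?g)"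
      unfolding swap_bd3[OF A Xc B] using g P BD gT' by (simp add: assoc_mult_mat[of _ ?N ?N _ ?N _ ?N])
    also have "blockdiag3 (transpose_mat ?B) (transpose_mat X) (transpose_mat A) * blockdiag3 ?J (gram m') ?J * ?g
       = blockdiag3 (transpose_mat ?B * ?J * A) (transpose_mat X * gram m' * X) (transpose_mat A * ?J * ?B)"
      by (simp add: bd3_mult[OF BT XT AT J G' J] bd3_mult[OF mult_carrier_mat[OF BT J] mult_carrier_mat[OF XT G'] mult_carrier_mat[OF AT J] A Xc B])
    also have "\<dots> = blockdiag3 ?J (gram m') ?J" unfolding e1 e2 Xo ..
    finally show ?thesis unfolding gram_decomp[where 'a='a, of k m'] .
  qed
  have "det ?g = det A * det A'"
    unfolding bd3_det[OF A Xc B] tau_det[OF A'] Xd by simp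
  also have "\<dots> = 1" using det_mult[OF A A'] AA' by simp
  finally have det: "det ?g = 1" .
  have gN: "?g \<in> carrier_mat (2*(k+m')+1) (2*(k+m')+1)" unfolding N by (rule g)
  show ?thesis unfolding SO_def using gN orth det by blast
qed

section \<open>Valuation facts\<close>

locale NA =
  fixes v :: "'a::field_char_0 \<Rightarrow> int" and red :: "'a \<Rightarrow> 'k::field"
  assumes na: "nonarch_local_field v red"
begin

lemma vmult: "x \<noteq> 0 \<Longrightarrow> y \<noteq> 0 \<Longrightarrow> v (x * y) = v x + v y"
  using na unfolding nonarch_local_field_def by blast

lemma vadd: "x \<noteq> 0 \<Longrightarrow> y \<noteq> 0 \<Longrightarrow> x + y \<noteq> 0 \<Longrightarrow> min (v x) (v y) \<le> v (x + y)"
  using na unfolding nonarch_local_field_def by blast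

lemma red_hom: "x \<in> intO v \<Longrightarrow> y \<in> intO v \<Longrightarrow> red (x + y) = red x + red y \<and> red (x * y) = red x * red y"
  using na unfolding nonarch_local_field_def by blast

lemma red_one: "red 1 = 1"
  using na unfolding nonarch_local_field_def by blast

lemma v_one: "v 1 = 0"
  using vmult[of 1 1] by simp

lemma v_m1: "v (-1) = 0"
  using vmult[of "-1" "-1"] v_one by simp

lemma O0[simp]: "0 \<in> intO v" unfolding intO_def by simp
lemma O1[simp]: "1 \<in> intO v" unfolding intO_def using v_one by simp

lemma Oadd: assumes "x \<in> intO v" "y \<in> intO v" shows "x + y \<in> intO v"
proof (cases "x = 0 \<or> y = 0 \<or> x + y = 0")
  case True then show ?thesis using assms by (auto simp: intO_def)
next
  case False
  then show ?thesis using vadd[of x y] assms by (auto simp: intO_def)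
qed

lemma Omult: assumes "x \<in> intO v" "y \<in> intO v" shows "x * y \<in> intO v"
proof (cases "x = 0 \<or> y = 0")
  case True then show ?thesis by (auto simp: intO_def)
next
  case False
  then show ?thesis using vmult[of x y] assms by (auto simp: intO_def)
qed

lemma Ouminus: assumes "x \<in> intO v" shows "- x \<in> intO v"
proof -
  have "- 1 \<in> intO v" unfolding intO_def using v_m1 by simp
  from Omult[OF this assms] show ?thesis by simp
qed

lemma Osum: "(\<And>i. i \<in> S \<Longrightarrow> f i \<in> intO v) \<Longrightarrow> sum f S \<in> intO v"
  by (induct S rule: infinite_finite_induct, auto intro: Oadd)

lemma red0[simp]: "red 0 = 0"
proof -
  have "red 0 = red 0 + red 0" using red_hom[OF O0 O0] by simp
  thus ?thesis by (metis add_cancel_right_right)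
qed

lemma red_add: "x \<in> intO v \<Longrightarrow> y \<in> intO v \<Longrightarrow> red (x + y) = red x + red y"
  using red_hom by blast

lemma red_mult: "x \<in> intO v \<Longrightarrow> y \<in> intO v \<Longrightarrow> red (x * y) = red x * red y"
  using red_hom by blast

lemma red_sum: "(\<And>i. i \<in> S \<Longrightarrow> f i \<in> intO v) \<Longrightarrow> red (sum f S) = (\<Sum>i\<in>S. red (f i))"
proof (induct S rule: infinite_finite_induct)
  case (insert x F)
  then show ?case by (simp add: red_add Osum)
qed auto

end

definition Omat :: "('a::field \<Rightarrow> int) \<Rightarrow> 'a mat \<Rightarrow> bool" where
  "Omat v A = (\<forall>i<dim_row A. \<forall>j<dim_col A. A $$ (i,j) \<in> intO v)"

definition sc :: "'a::field \<Rightarrow> nat \<Rightarrow> nat \<Rightarrow> 'a" where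
  "sc w m i = (if i < m then 1 else w)"

lemma sc_nz: "w \<noteq> 0 \<Longrightarrow> sc w m i \<noteq> 0" unfolding sc_def by auto

lemma latt_coords_index: "i < 2*m+1 \<Longrightarrow> j < 2*m+1 \<Longrightarrow>
  latt_coords w m g $$ (i,j) = g $$ (i,j) * sc w m j / sc w m i"
  unfolding latt_coords_def sc_def by simp

lemma latt_coords_dims[simp]: "dim_row (latt_coords w m g) = 2*m+1" "dim_col (latt_coords w m g) = 2*m+1"
  unfolding latt_coords_def by simp_all

lemma latt_mem: "x \<in> latt v w m \<longleftrightarrow> x \<in> carrier_vec (2*m+1) \<and> (\<forall>i<2*m+1. \<exists>y\<in>intO v. x $ i = sc w m i * y)"
proof -
  have e: "(\<exists>y\<in>intO v. x $ i = sc w m i * y) \<longleftrightarrow> (if i < m then x $ i \<in> intO v else x $ i \<in> {w * y | y. y \<in> intO v})" for i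
    unfolding sc_def by auto
  have "(\<forall>i<2*m+1. \<exists>y\<in>intO v. x $ i = sc w m i * y) \<longleftrightarrow>
     (\<forall>i<m. x $ i \<in> intO v) \<and> (\<forall>i. m \<le> i \<longrightarrow> i < 2*m+1 \<longrightarrow> x $ i \<in> {w * y | y. y \<in> intO v})"
    unfolding e
  proof (intro iffI conjI allI impI)
    fix i assume H: "\<forall>i<2 * m + 1. if i < m then x $ i \<in> intO v else x $ i \<in> {w * y |y. y \<in> intO v}"
    { assume "i < m" thus "x $ i \<in> intO v" using H[rule_format, of i] by simp }
    { assume "m \<le> i" "i < 2*m+1" thus "x $ i \<in> {w * y |y. y \<in> intO v}" using H[rule_format, of i] by simp }
  next
    fix i assume H: "(\<forall>i<m. x $ i \<in> intO v) \<and> (\<forall>i. m \<le> i \<longrightarrow> i < 2*m+1 \<longrightarrow> x $ i \<in> {w * y | y. y \<in> intO v})"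
      and i: "i < 2*m+1"
    show "if i < m then x $ i \<in> intO v else x $ i \<in> {w * y |y. y \<in> intO v}"
      using H i by (cases "i < m", simp_all)
  qed
  thus ?thesis unfolding latt_def by blast
qed

context NA begin

lemma latt_sub:
  assumes w: "w \<noteq> 0" and g: "g \<in> carrier_mat (2*m+1) (2*m+1)"
  shows "(\<forall>x\<in>latt v w m. g *\<^sub>v x \<in> latt v w m) \<longleftrightarrow> Omat v (latt_coords w m g)"
proof
  let ?N = "2*m+1"
  assume H: "\<forall>x\<in>latt v w m. g *\<^sub>v x \<in> latt v w m"
  show "Omat v (latt_coords w m g)" unfolding Omat_def latt_coords_dims
  proof (intro allI impI)
    fix i j assume i: "i < ?N" and j: "j < ?N"
    define x where "x = vec ?N (\<lambda>l. if l = j then sc w m j else 0)"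
    have "x \<in> latt v w m" unfolding latt_mem x_def
    proof (intro conjI allI impI)
      fix l assume "l < ?N"
      show "\<exists>y\<in>intO v. vec ?N (\<lambda>l. if l = j then sc w m j else 0) $ l = sc w m l * y"
      proof (cases "l = j")
        case True then show ?thesis using \<open>l < ?N\<close> by (intro bexI[of _ 1], auto)
      next
        case False then show ?thesis using \<open>l < ?N\<close> by (intro bexI[of _ 0], auto)
      qed
    qed simp
    with H have "g *\<^sub>v x \<in> latt v w m" by blast
    then obtain y where y: "y \<in> intO v" and e: "(g *\<^sub>v x) $ i = sc w m i * y" using i unfolding latt_mem by blast
    have "(g *\<^sub>v x) $ i = (\<Sum>l = 0..<?N. g $$ (i,l) * (if l = j then sc w m j else 0))"
      using g i unfolding x_def by (simp add: scalar_prod_def)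
    also have "\<dots> = (\<Sum>l = 0..<?N. if l = j then g $$ (i,l) * sc w m j else 0)"
      by (rule sum.cong, auto)
    also have "\<dots> = g $$ (i,j) * sc w m j" using j by simp
    finally have "g $$ (i,j) * sc w m j / sc w m i = y" using e sc_nz[OF w] by (simp add: field_simps)
    thus "latt_coords w m g $$ (i,j) \<in> intO v" unfolding latt_coords_index[OF i j, of w g] using y by simp
  qed
next
  let ?N = "2*m+1"
  assume H: "Omat v (latt_coords w m g)"
  show "\<forall>x\<in>latt v w m. g *\<^sub>v x \<in> latt v w m"
  proof
    fix x assume x: "x \<in> latt v w m"
    hence xc: "x \<in> carrier_vec ?N" and "\<forall>l<?N. \<exists>y\<in>intO v. x $ l = sc w m l * y" unfolding latt_mem by auto
    then obtain yf where yf: "\<And>l. l < ?N \<Longrightarrow> yf l \<in> intO v \<and> x $ l = sc w m l * yf l" by metis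
    show "g *\<^sub>v x \<in> latt v w m" unfolding latt_mem
    proof (intro conjI allI impI)
      show "g *\<^sub>v x \<in> carrier_vec ?N" using g xc by simp
      fix i assume i: "i < ?N"
      have "(g *\<^sub>v x) $ i = (\<Sum>l = 0..<?N. g $$ (i,l) * x $ l)"
        using g i xc by (simp add: scalar_prod_def)
      also have "\<dots> = (\<Sum>l = 0..<?N. sc w m i * (latt_coords w m g $$ (i,l) * yf l))"
      proof (rule sum.cong[OF refl])
        fix l assume "l \<in> {0..<?N}"
        hence l: "l < ?N" by simp
        have "sc w m i * (latt_coords w m g $$ (i,l) * yf l) = sc w m i * (g $$ (i,l) * sc w m l / sc w m i * yf l)"
          unfolding latt_coords_index[OF i l] ..
        also have "\<dots> = g $$ (i,l) * (sc w m l * yf l)" using sc_nz[OF w, of m i] by (simp add: field_simps)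
        also have "\<dots> = g $$ (i,l) * x $ l" using yf[OF l] by simp
        finally show "g $$ (i,l) * x $ l = sc w m i * (latt_coords w m g $$ (i,l) * yf l)" by simp
      qed
      also have "\<dots> = sc w m i * (\<Sum>l = 0..<?N. latt_coords w m g $$ (i,l) * yf l)"
        by (rule sum_distrib_left[symmetric])
      finally have e: "(g *\<^sub>v x) $ i = sc w m i * (\<Sum>l = 0..<?N. latt_coords w m g $$ (i,l) * yf l)" .
      have "(\<Sum>l = 0..<?N. latt_coords w m g $$ (i,l) * yf l) \<in> intO v"
        using H i yf unfolding Omat_def by (intro Osum Omult, auto)
      thus "\<exists>y\<in>intO v. (g *\<^sub>v x) $ i = sc w m i * y" using e by blast
    qed
  qed
qed

end

lemma latt_carrier: "latt v w m \<subseteq> carrier_vec (2*m+1)"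
  unfolding latt_def by auto

lemma latt_eq:
  fixes g h :: "'a::field mat"
  assumes g: "g \<in> carrier_mat N N" and h: "h \<in> carrier_mat N N"
    and gh: "g * h = 1\<^sub>m N" and hg: "h * g = 1\<^sub>m N" and L: "L \<subseteq> carrier_vec N"
  shows "((\<lambda>x. g *\<^sub>v x) ` L = L) \<longleftrightarrow> (\<forall>x\<in>L. g *\<^sub>v x \<in> L) \<and> (\<forall>x\<in>L. h *\<^sub>v x \<in> L)"
proof
  assume e: "(\<lambda>x. g *\<^sub>v x) ` L = L"
  show "(\<forall>x\<in>L. g *\<^sub>v x \<in> L) \<and> (\<forall>x\<in>L. h *\<^sub>v x \<in> L)"
  proof
    show "\<forall>x\<in>L. g *\<^sub>v x \<in> L" using e by blast
    show "\<forall>x\<in>L. h *\<^sub>v x \<in> L"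
    proof
      fix x assume "x \<in> L"
      then obtain z where z: "z \<in> L" and xz: "x = g *\<^sub>v z" using e by blast
      have "h *\<^sub>v x = (h * g) *\<^sub>v z" unfolding xz using g h z L by (auto simp: assoc_mult_mat_vec)
      also have "\<dots> = z" using hg z L by auto
      finally show "h *\<^sub>v x \<in> L" using z by simp
    qed
  qed
next
  assume H: "(\<forall>x\<in>L. g *\<^sub>v x \<in> L) \<and> (\<forall>x\<in>L. h *\<^sub>v x \<in> L)"
  show "(\<lambda>x. g *\<^sub>v x) ` L = L"
  proof
    show "(\<lambda>x. g *\<^sub>v x) ` L \<subseteq> L" using H by blast
    show "L \<subseteq> (\<lambda>x. g *\<^sub>v x) ` L"
    proof
      fix x assume x: "x \<in> L"
      have "g *\<^sub>v (h *\<^sub>v x) = (g * h) *\<^sub>v x" using g h x L by (auto simp: assoc_mult_mat_vec)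
      also have "\<dots> = x" using gh x L by auto
      finally show "x \<in> (\<lambda>x. g *\<^sub>v x) ` L" using H x by (metis image_eqI)
    qed
  qed
qed

lemma (in NA) paramodular_char:
  assumes w: "w \<noteq> 0" and g: "g \<in> SO m" and h: "h \<in> carrier_mat (2*m+1) (2*m+1)"
    and gh: "g * h = 1\<^sub>m (2*m+1)" and hg: "h * g = 1\<^sub>m (2*m+1)"
  shows "g \<in> paramodular v w m \<longleftrightarrow> Omat v (latt_coords w m g) \<and> Omat v (latt_coords w m h)"
proof -
  have gc: "g \<in> carrier_mat (2*m+1) (2*m+1)" using g unfolding SO_def by auto
  show ?thesis unfolding paramodular_def using g
    latt_eq[OF gc h gh hg latt_carrier] latt_sub[OF w gc] latt_sub[OF w h] by auto
qed

lemma lc_bd3: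
  fixes C :: "'a::field mat"
  assumes w: "w \<noteq> 0" and C: "C \<in> carrier_mat k k" and X: "X \<in> carrier_mat (2*m'+1) (2*m'+1)"
    and T: "T \<in> carrier_mat k k"
  shows "latt_coords w (k+m') (blockdiag3 C X T) = blockdiag3 C (latt_coords w m' X) T"
proof -
  let ?b = "2*m'+1"
  let ?N = "k+(?b+k)"
  have N: "2*(k+m')+1 = ?N" by simp
  have lX: "latt_coords w m' X \<in> carrier_mat ?b ?b" by (rule carrier_matI, simp_all)
  show ?thesis
  proof (rule bd3_eqI[OF C lX T])
    show "latt_coords w (k + m') (blockdiag3 C X T) \<in> carrier_mat ?N ?N"
      by (rule carrier_matI, simp_all)
    fix i j assume i: "i < ?N" and j: "j < ?N"
    have e1: "latt_coords w (k+m') (blockdiag3 C X T) $$ (i,j) = blockdiag3 C X T $$ (i,j) * sc w (k+m') j / sc w (k+m') i"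
      by (rule latt_coords_index, insert i j, auto)
    note e2 = bd3_index[OF C X T i j]
    have goal: "blockdiag3 C X T $$ (i,j) * sc w (k+m') j / sc w (k+m') i =
          (if i < k then if j < k then C $$ (i, j) else 0
           else if i < k + ?b then if k \<le> j \<and> j < k + ?b then latt_coords w m' X $$ (i - k, j - k) else 0
                else if k + ?b \<le> j then T $$ (i - k - ?b, j - k - ?b) else 0)"
    proof -
      consider (a) "i < k" "j < k" | (b) "i < k" "\<not> j < k" | (c) "\<not> i < k" "i < k + ?b" "k \<le> j \<and> j < k + ?b"
        | (d) "\<not> i < k" "i < k + ?b" "j < k" | (d2) "\<not> i < k" "i < k + ?b" "k + ?b \<le> j"
        | (e) "\<not> i < k + ?b" "k + ?b \<le> j" | (f) "\<not> i < k + ?b" "\<not> k + ?b \<le> j" by linarith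
      then show ?thesis
      proof cases
        case a
        have "sc w (k+m') j = 1" "sc w (k+m') i = 1" using a unfolding sc_def by auto
        then show ?thesis using a e2 by simp
      next
        case b
        then show ?thesis using e2 by simp
      next
        case c
        have "latt_coords w m' X $$ (i - k, j - k) = X $$ (i - k, j - k) * sc w m' (j - k) / sc w m' (i - k)"
          by (rule latt_coords_index, insert c, auto)
        moreover have "sc w m' (j - k) = sc w (k + m') j" "sc w m' (i - k) = sc w (k + m') i"
          using c unfolding sc_def by auto
        ultimately show ?thesis using c e2 by simp
      next
        case d
        then show ?thesis using e2 by simp
      next
        case d2
        then show ?thesis using e2 by simp
      next
        case e
        have "sc w (k+m') j = w" "sc w (k+m') i = w" using e unfolding sc_def by auto
        then show ?thesis using e e2 w by simp
      next
        case f
        then show ?thesis using e2 by simp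
      qed
    qed
    show "latt_coords w (k + m') (blockdiag3 C X T) $$ (i, j) =
          (if i < k then if j < k then C $$ (i, j) else 0
           else if i < k + ?b then if k \<le> j \<and> j < k + ?b then latt_coords w m' X $$ (i - k, j - k) else 0
                else if k + ?b \<le> j then T $$ (i - k - ?b, j - k - ?b) else 0)"
      using e1 goal by simp
  qed
qed


lemma del_bd3:
  fixes C :: "'a::zero mat"
  assumes C: "C \<in> carrier_mat k k" and Y: "Y \<in> carrier_mat (2*m'+1) (2*m'+1)"
    and T: "T \<in> carrier_mat k k"
  shows "mat_delete (blockdiag3 C Y T) (k+m') (k+m') = blockdiag3 C (mat_delete Y m' m') T"
proof -
  let ?b = "2*m'+1"
  let ?N = "k+(?b+k)"
  have Y': "mat_delete Y m' m' \<in> carrier_mat (2*m') (2*m')"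
    using mat_delete_carrier[OF Y, of m' m'] by simp
  have g: "blockdiag3 C Y T \<in> carrier_mat ?N ?N" by (rule bd3_carrier[OF C Y T])
  show ?thesis
  proof (rule bd3_eqI[OF C Y' T])
    show "mat_delete (blockdiag3 C Y T) (k + m') (k + m') \<in> carrier_mat (k + (2 * m' + k)) (k + (2 * m' + k))"
      using mat_delete_carrier[OF g, of "k+m'" "k+m'"] by simp
    fix i j assume i: "i < k + (2*m' + k)" and j: "j < k + (2*m' + k)"
    define ii where "ii = (if i < k + m' then i else Suc i)"
    define jj where "jj = (if j < k + m' then j else Suc j)"
    have ii: "ii < ?N" and jj: "jj < ?N" using i j unfolding ii_def jj_def by auto
    have e1: "mat_delete (blockdiag3 C Y T) (k + m') (k + m') $$ (i,j) = blockdiag3 C Y T $$ (ii, jj)"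
    proof -
      have d: "dim_row C = k" "dim_col C = k" "dim_row Y = ?b" "dim_col Y = ?b" "dim_row T = k" "dim_col T = k"
        using C Y T by auto
      show ?thesis unfolding mat_delete_def ii_def jj_def using i j by (simp add: d)
    qed
    note e2 = bd3_index[OF C Y T ii jj]
    have e3: "i - k < 2*m' \<Longrightarrow> j - k < 2*m' \<Longrightarrow> mat_delete Y m' m' $$ (i - k, j - k) =
       Y $$ (if i - k < m' then i - k else Suc (i - k), if j - k < m' then j - k else Suc (j - k))"
      unfolding mat_delete_def using Y by simp
    define RHS where "RHS = (if i < k then if j < k then C $$ (i, j) else 0
        else if i < k + 2 * m' then if k \<le> j \<and> j < k + 2 * m' then mat_delete Y m' m' $$ (i - k, j - k) else 0
             else if k + 2 * m' \<le> j then T $$ (i - k - 2 * m', j - k - 2 * m') else 0)"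
    have "blockdiag3 C Y T $$ (ii, jj) = RHS"
    proof -
      consider (a) "i < k" | (b) "k \<le> i" "i < k + 2*m'" | (c) "k + 2*m' \<le> i" using i by linarith
      then show ?thesis
      proof cases
        case a
        have iia: "ii = i" "ii < k" using a unfolding ii_def by auto
        consider (a') "j < k" | (b') "k \<le> j" using j by linarith
        then show ?thesis
        proof cases
          case a'
          have "jj = j" using a' unfolding jj_def by auto
          then show ?thesis unfolding e2 RHS_def using a a' iia by simp
        next
          case b'
          have "\<not> jj < k" using b' unfolding jj_def by auto
          then show ?thesis unfolding e2 RHS_def using a b' iia by simp
        qed
      next
        case b
        have iib: "\<not> ii < k" "ii < k + ?b" "ii - k = (if i - k < m' then i - k else Suc (i - k))"
          using b unfolding ii_def by auto
        consider (a') "j < k" | (b') "k \<le> j" "j < k + 2*m'" | (c') "k + 2*m' \<le> j" using j by linarith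
        then show ?thesis
        proof cases
          case a'
          have "jj < k" using a' unfolding jj_def by auto
          then show ?thesis unfolding e2 RHS_def using b a' iib by simp
        next
          case b'
          have jjb: "k \<le> jj" "jj < k + ?b" "jj - k = (if j - k < m' then j - k else Suc (j - k))"
            using b' unfolding jj_def by auto
          have "mat_delete Y m' m' $$ (i - k, j - k) = Y $$ (ii - k, jj - k)"
            unfolding e3[OF _ _] iib(3) jjb(3) using b b' by (subst e3, auto)
          then show ?thesis unfolding e2 RHS_def using b b' iib jjb by simp
        next
          case c'
          have "\<not> jj < k + ?b" using c' unfolding jj_def by auto
          then show ?thesis unfolding e2 RHS_def using b c' iib by simp
        qed
      next
        case c
        have iic: "\<not> ii < k + ?b" "ii - k - ?b = i - k - 2*m'" using c unfolding ii_def by auto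
        consider (a') "j < k + 2*m'" | (c') "k + 2*m' \<le> j" using j by linarith
        then show ?thesis
        proof cases
          case a'
          have "\<not> k + ?b \<le> jj" using a' unfolding jj_def by auto
          then show ?thesis unfolding e2 RHS_def using c a' iic by simp
        next
          case c'
          have "k + ?b \<le> jj" "jj - k - ?b = j - k - 2*m'" using c' unfolding jj_def by auto
          then show ?thesis unfolding e2 RHS_def using c c' iic by simp
        qed
      qed
    qed
    thus "mat_delete (blockdiag3 C Y T) (k + m') (k + m') $$ (i,j) =
       (if i < k then if j < k then C $$ (i, j) else 0
        else if i < k + 2 * m' then if k \<le> j \<and> j < k + 2 * m' then mat_delete Y m' m' $$ (i - k, j - k) else 0
             else if k + 2 * m' \<le> j then T $$ (i - k - 2 * m', j - k - 2 * m') else 0)"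
      unfolding e1 RHS_def .
  qed
qed

definition acond :: "('a::field_char_0 \<Rightarrow> 'k::field) \<Rightarrow> 'a \<Rightarrow> nat \<Rightarrow> 'a mat \<Rightarrow> bool" where
  "acond red w m g = (if (2::'k) \<noteq> 0 then det (gbar red w m g) = 1
     else even (vec_space.rank (2*m) (gbar red w m g - 1\<^sub>m (2*m))))"

lemma pp_acond: "paramodular_plus v w red m = {g \<in> paramodular v w m. acond red w m g}"
  unfolding paramodular_plus_def acond_def ..

lemma O0'[simp]: "0 \<in> intO v" unfolding intO_def by simp

lemma Omat_bd3:
  assumes A: "A \<in> carrier_mat a a" and X: "X \<in> carrier_mat b b" and B: "B \<in> carrier_mat c c"
  shows "Omat v (blockdiag3 A X B) \<longleftrightarrow> Omat v A \<and> Omat v X \<and> Omat v B"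
proof
  assume H: "Omat v (blockdiag3 A X B)"
  have H': "\<And>i j. i < a + (b + c) \<Longrightarrow> j < a + (b + c) \<Longrightarrow> blockdiag3 A X B $$ (i,j) \<in> intO v"
    using H A X B unfolding Omat_def by auto
  show "Omat v A \<and> Omat v X \<and> Omat v B" unfolding Omat_def
  proof (intro conjI allI impI)
    fix i j
    { assume "i < dim_row A" "j < dim_col A"
      thus "A $$ (i,j) \<in> intO v" using H'[of i j] A by (simp add: bd3_index[OF A X B]) }
    { assume "i < dim_row X" "j < dim_col X"
      thus "X $$ (i,j) \<in> intO v" using H'[of "a+i" "a+j"] X by (simp add: bd3_index[OF A X B]) }
    { assume "i < dim_row B" "j < dim_col B"
      thus "B $$ (i,j) \<in> intO v" using H'[of "a+b+i" "a+b+j"] B by (simp add: bd3_index[OF A X B]) }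
  qed
next
  assume H: "Omat v A \<and> Omat v X \<and> Omat v B"
  show "Omat v (blockdiag3 A X B)" unfolding Omat_def
  proof (intro allI impI)
    fix i j assume "i < dim_row (blockdiag3 A X B)" "j < dim_col (blockdiag3 A X B)"
    hence i: "i < a + (b + c)" and j: "j < a + (b + c)" using A X B by auto
    show "blockdiag3 A X B $$ (i,j) \<in> intO v"
      unfolding bd3_index[OF A X B i j] using H A X B i j unfolding Omat_def by auto
  qed
qed

lemma Omat_tau:
  assumes A: "A \<in> carrier_mat n n"
  shows "Omat v (tau A) \<longleftrightarrow> Omat v A"
proof
  assume H: "Omat v (tau A)"
  show "Omat v A" unfolding Omat_def
  proof (intro allI impI)
    fix i j assume "i < dim_row A" "j < dim_col A"
    hence i: "i < n" and j: "j < n" using A by auto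
    have "tau A $$ (n - 1 - j, n - 1 - i) \<in> intO v" using H i j A unfolding Omat_def by auto
    thus "A $$ (i,j) \<in> intO v" using tau_index[OF A, of "n - 1 - j" "n - 1 - i"] i j by auto
  qed
next
  assume H: "Omat v A"
  show "Omat v (tau A)" unfolding Omat_def
    using H A by (auto simp: tau_index Omat_def)
qed

lemma mat_inv_props:
  fixes C :: "'a::field mat"
  assumes C: "C \<in> carrier_mat n n" and inv: "invertible_mat C"
  shows "mat_inv C \<in> carrier_mat n n" "C * mat_inv C = 1\<^sub>m n" "mat_inv C * C = 1\<^sub>m n"
proof -
  from inv obtain B where AB: "inverts_mat C B" and BA: "inverts_mat B C"
    unfolding invertible_mat_def by blast
  have CB: "C * B = 1\<^sub>m n" using AB C unfolding inverts_mat_def by simp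
  have "dim_col B = n" using CB by (metis index_mult_mat(3) index_one_mat(3))
  moreover have "dim_row B = n" using BA C unfolding inverts_mat_def
    by (metis index_mult_mat(3) index_one_mat(3) carrier_matD(2))
  ultimately have Bc: "B \<in> carrier_mat n n" by auto
  have BC: "B * C = 1\<^sub>m n" using BA Bc unfolding inverts_mat_def by simp
  have ex: "\<exists>B. B \<in> carrier_mat (dim_row C) (dim_row C) \<and> C * B = 1\<^sub>m (dim_row C) \<and> B * C = 1\<^sub>m (dim_row C)"
    using Bc CB BC C by auto
  from someI_ex[OF ex] C
  show "mat_inv C \<in> carrier_mat n n" "C * mat_inv C = 1\<^sub>m n" "mat_inv C * C = 1\<^sub>m n"
    unfolding mat_inv_def by auto
qed

lemma SO_inv:
  assumes X: "X \<in> SO m"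
  shows "mat_inv X \<in> carrier_mat (2*m+1) (2*m+1)" "X * mat_inv X = 1\<^sub>m (2*m+1)" "mat_inv X * X = 1\<^sub>m (2*m+1)"
proof -
  have Xc: "X \<in> carrier_mat (2*m+1) (2*m+1)" and d: "det X = 1" using X unfolding SO_def by auto
  have "X \<in> Units (ring_mat TYPE('a) (2*m+1) ())" by (rule det_non_zero_imp_unit[OF Xc], simp add: d)
  then obtain B where B: "B \<in> carrier_mat (2*m+1) (2*m+1)" "B * X = 1\<^sub>m (2*m+1)" "X * B = 1\<^sub>m (2*m+1)"
    unfolding Units_def by (auto simp: ring_mat_def)
  have "invertible_mat X" unfolding invertible_mat_def inverts_mat_def square_mat.simps
    using Xc B by auto
  from mat_inv_props[OF Xc this]
  show "mat_inv X \<in> carrier_mat (2*m+1) (2*m+1)" "X * mat_inv X = 1\<^sub>m (2*m+1)" "mat_inv X * X = 1\<^sub>m (2*m+1)" by auto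
qed

lemma (in NA) red_mat_mult:
  assumes A: "A \<in> carrier_mat n p" and B: "B \<in> carrier_mat p q" and OA: "Omat v A" and OB: "Omat v B"
  shows "map_mat red (A * B) = map_mat red A * map_mat red B"
proof (rule eq_matI)
  fix i j assume "i < dim_row (map_mat red A * map_mat red B)" "j < dim_col (map_mat red A * map_mat red B)"
  hence i: "i < n" and j: "j < q" using A B by auto
  have "map_mat red (A * B) $$ (i,j) = red (\<Sum>l = 0..<p. A $$ (i,l) * B $$ (l,j))"
    using A B i j by (simp add: scalar_prod_def)
  also have "\<dots> = (\<Sum>l = 0..<p. red (A $$ (i,l)) * red (B $$ (l,j)))"
    using OA OB A B i j unfolding Omat_def by (subst red_sum, auto intro!: Omult red_mult sum.cong)
  also have "\<dots> = (map_mat red A * map_mat red B) $$ (i,j)"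
    using A B i j by (simp add: scalar_prod_def)
  finally show "map_mat red (A * B) $$ (i,j) = (map_mat red A * map_mat red B) $$ (i,j)" .
qed (insert A B, auto)

lemma (in NA) red_one_mat: "map_mat red (1\<^sub>m n) = 1\<^sub>m n"
  by (rule eq_matI, auto simp: red_one)

context NA begin

lemma gbar_bd3:
  assumes w: "w \<noteq> 0" and C: "C \<in> carrier_mat k k" and X: "X \<in> carrier_mat (2*m'+1) (2*m'+1)"
    and T: "T \<in> carrier_mat k k"
  shows "gbar red w (k+m') (blockdiag3 C X T) = blockdiag3 (map_mat red C) (gbar red w m' X) (map_mat red T)"
proof -
  have lX: "latt_coords w m' X \<in> carrier_mat (2*m'+1) (2*m'+1)" by (rule carrier_matI, simp_all)
  have Y': "mat_delete (latt_coords w m' X) m' m' \<in> carrier_mat (2*m') (2*m')"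
    using mat_delete_carrier[OF lX, of m' m'] by simp
  show ?thesis unfolding gbar_def lc_bd3[OF w C X T] del_bd3[OF C lX T] bd3_map[where f=red, OF C Y' T red0] ..
qed

lemma gbar_carrier: "gbar red w m X \<in> carrier_mat (2*m) (2*m)"
  unfolding gbar_def by (rule carrier_matI, simp_all)

lemma one_minus_mat: "A \<in> carrier_mat n n \<Longrightarrow> 1\<^sub>m n - A = - (A - 1\<^sub>m n :: 'b::comm_ring_1 mat)"
  by (rule eq_matI, auto)

lemma acond_step:
  assumes w: "w \<noteq> 0" and C: "C \<in> carrier_mat k k" and C': "C' \<in> carrier_mat k k"
    and CC': "C * C' = 1\<^sub>m k" and C'C: "C' * C = 1\<^sub>m k" and OC: "Omat v C" and OC': "Omat v C'"
    and X: "X \<in> carrier_mat (2*m'+1) (2*m'+1)"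
  shows "acond red w (k+m') (blockdiag3 C X (tau C')) \<longleftrightarrow> acond red w m' X"
proof -
  define rC where "rC = map_mat red C"
  define rC' where "rC' = map_mat red C'"
  define G where "G = gbar red w m' X"
  have rCc: "rC \<in> carrier_mat k k" and rC'c: "rC' \<in> carrier_mat k k" using C C' unfolding rC_def rC'_def by auto
  have Gc: "G \<in> carrier_mat (2*m') (2*m')" unfolding G_def by (rule gbar_carrier)
  have T: "tau C' \<in> carrier_mat k k" using C' by simp
  have big: "gbar red w (k+m') (blockdiag3 C X (tau C')) = blockdiag3 rC G (tau rC')"
    unfolding gbar_bd3[OF w C X T] rC_def G_def rC'_def tau_map[OF C'] ..
  have r1: "rC * rC' = 1\<^sub>m k"
    unfolding rC_def rC'_def using red_mat_mult[OF C C' OC OC'] CC' red_one_mat by simp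
  have r2: "rC' * rC = 1\<^sub>m k"
    unfolding rC_def rC'_def using red_mat_mult[OF C' C OC' OC] C'C red_one_mat by simp
  have tr: "tau rC' \<in> carrier_mat k k" using rC'c by simp
  show ?thesis
  proof (cases "(2::'k) \<noteq> 0")
    case True
    have "det (blockdiag3 rC G (tau rC')) = det G * (det rC * det rC')"
      unfolding bd3_det[OF rCc Gc tr] tau_det[OF rC'c] by (simp add: ac_simps)
    also have "det rC * det rC' = 1" using det_mult[OF rCc rC'c] r1 by simp
    finally show ?thesis unfolding acond_def big G_def using True by simp
  next
    case False
    have N: "2*(k+m') = k + (2*m' + k)" by simp
    have M: "blockdiag3 rC G (tau rC') - 1\<^sub>m (2*(k+m')) =
       blockdiag3 (rC - 1\<^sub>m k) (G - 1\<^sub>m (2*m')) (tau rC' - 1\<^sub>m k)"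
      unfolding N bd3_one by (rule bd3_minus[OF rCc Gc tr], auto)
    have Mc: "blockdiag3 rC G (tau rC') - 1\<^sub>m (2*(k+m')) \<in> carrier_mat (2*(k+m')) (2*(k+m'))"
    proof -
      have Mc': "blockdiag3 (rC - 1\<^sub>m k) (G - 1\<^sub>m (2*m')) (tau rC' - 1\<^sub>m k) \<in> carrier_mat (k + (2*m' + k)) (k + (2*m' + k))"
        by (rule bd3_carrier, insert rCc Gc tr, auto)
      show ?thesis unfolding M using Mc'[folded N] .
    qed
    have k1: "kernel_dim (blockdiag3 rC G (tau rC') - 1\<^sub>m (2*(k+m'))) =
       kernel_dim (rC - 1\<^sub>m k) + kernel_dim (G - 1\<^sub>m (2*m')) + kernel_dim (tau rC' - 1\<^sub>m k)"
      unfolding M by (rule bd3_kernel_dim, insert rCc Gc tr, auto)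
    have "tau rC' - 1\<^sub>m k = tau (rC' - 1\<^sub>m k)"
      unfolding tau_minus[OF rC'c one_carrier_mat] tau_one ..
    hence "kernel_dim (tau rC' - 1\<^sub>m k) = kernel_dim (rC' - 1\<^sub>m k)"
      using tau_kernel_dim[OF minus_carrier_mat[OF one_carrier_mat, of rC' k]] rC'c by simp
    also have "rC' - 1\<^sub>m k = rC' * (1\<^sub>m k - rC)"
      using rC'c rCc r2 by (simp add: mult_minus_distrib_mat[OF rC'c one_carrier_mat rCc])
    also have "kernel_dim \<dots> = kernel_dim (1\<^sub>m k - rC)"
      by (rule kernel_dim_left_inv[OF _ rC'c rCc r1], insert rCc, auto)
    also have "\<dots> = kernel_dim (rC - 1\<^sub>m k)"
      unfolding one_minus_mat[OF rCc] by (rule kernel_dim_uminus, insert rCc, auto)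
    finally have k2: "kernel_dim (tau rC' - 1\<^sub>m k) = kernel_dim (rC - 1\<^sub>m k)" .
    have rn1: "vec_space.rank (2*(k+m')) (blockdiag3 rC G (tau rC') - 1\<^sub>m (2*(k+m'))) +
      kernel_dim (blockdiag3 rC G (tau rC') - 1\<^sub>m (2*(k+m'))) = 2*(k+m')"
      by (rule rank_nullity_mat[OF Mc])
    have rn2: "vec_space.rank (2*m') (G - 1\<^sub>m (2*m')) + kernel_dim (G - 1\<^sub>m (2*m')) = 2*m'"
      by (rule rank_nullity_mat, insert Gc, auto)
    have "even (vec_space.rank (2*(k+m')) (blockdiag3 rC G (tau rC') - 1\<^sub>m (2*(k+m')))) \<longleftrightarrow>
          even (vec_space.rank (2*m') (G - 1\<^sub>m (2*m')))"
      using rn1 rn2 k1 k2 by presburger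
    thus ?thesis unfolding acond_def big G_def using False by simp
  qed
qed

lemma pp_step:
  assumes w: "w \<noteq> 0" and C: "C \<in> GL_F k" and X: "X \<in> SO m'"
  shows "blockdiag3 C X (tau (mat_inv C)) \<in> paramodular_plus v w red (k+m') \<longleftrightarrow>
         C \<in> GL_O v k \<and> X \<in> paramodular_plus v w red m'"
proof -
  let ?b = "2*m'+1"
  let ?N = "k+(?b+k)"
  define C' where "C' = mat_inv C"
  define X' where "X' = mat_inv X"
  have Cc: "C \<in> carrier_mat k k" and Ci: "invertible_mat C" using C unfolding GL_F_def by auto
  note Ci = mat_inv_props[OF Cc Ci, folded C'_def]
  have C': "C' \<in> carrier_mat k k" using Ci by simp
  note Xi = SO_inv[OF X, folded X'_def]
  have Xc: "X \<in> carrier_mat ?b ?b" using X unfolding SO_def by auto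
  have X': "X' \<in> carrier_mat ?b ?b" using Xi by simp
  have T: "tau C' \<in> carrier_mat k k" and T': "tau C \<in> carrier_mat k k" using C' Cc by auto
  define g where "g = blockdiag3 C X (tau C')"
  define h where "h = blockdiag3 C' X' (tau C)"
  have gSO: "g \<in> SO (k+m')" unfolding g_def by (rule SO_step[OF Cc C' Ci(2) Ci(3) X])
  have N: "2*(k+m')+1 = ?N" by simp
  have hc: "h \<in> carrier_mat (2*(k+m')+1) (2*(k+m')+1)" unfolding N h_def by (rule bd3_carrier[OF C' X' T'])
  have t1: "tau C' * tau C = 1\<^sub>m k" using tau_mult[OF Cc C', symmetric] Ci(2) tau_one by simp
  have t2: "tau C * tau C' = 1\<^sub>m k" using tau_mult[OF C' Cc, symmetric] Ci(3) tau_one by simp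
  have gh: "g * h = 1\<^sub>m (2*(k+m')+1)"
    unfolding g_def h_def N bd3_mult[OF Cc Xc T C' X' T'] Ci(2) Xi(2) t1 bd3_one ..
  have hg: "h * g = 1\<^sub>m (2*(k+m')+1)"
    unfolding g_def h_def N bd3_mult[OF C' X' T' Cc Xc T] Ci(3) Xi(3) t2 bd3_one ..
  have lXc: "latt_coords w m' X \<in> carrier_mat ?b ?b" "latt_coords w m' X' \<in> carrier_mat ?b ?b"
    by (rule carrier_matI, simp_all)+
  have pg: "g \<in> paramodular v w (k+m') \<longleftrightarrow>
      (Omat v C \<and> Omat v C') \<and> X \<in> paramodular v w m'"
    unfolding paramodular_char[OF w gSO hc gh hg] paramodular_char[OF w X Xi]
    unfolding g_def h_def lc_bd3[OF w Cc Xc T] lc_bd3[OF w C' X' T']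
      Omat_bd3[OF Cc lXc(1) T] Omat_bd3[OF C' lXc(2) T'] Omat_tau[OF C'] Omat_tau[OF Cc]
    by blast
  have GL: "C \<in> GL_O v k \<longleftrightarrow> Omat v C \<and> Omat v C'"
    unfolding GL_O_def Omat_def C'_def using C Cc Ci(1)[unfolded C'_def] by auto
  show ?thesis
    unfolding pp_acond mem_Collect_eq C'_def[symmetric] g_def[symmetric] pg GL
    using acond_step[OF w Cc C' Ci(2) Ci(3) _ _ Xc] unfolding g_def by blast
qed

end

lemma (in NA) levi_main:
  assumes w: "w \<noteq> 0" and L: "list_all2 (\<lambda>C ni. C \<in> GL_F ni) Cs ns" and D: "D \<in> SO nt"
  shows "levi_embed Cs D \<in> SO (sum_list ns + nt) \<and>
    (levi_embed Cs D \<in> paramodular_plus v w red (sum_list ns + nt) \<longleftrightarrow>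
      list_all2 (\<lambda>C ni. C \<in> GL_O v ni) Cs ns \<and> D \<in> paramodular_plus v w red nt)"
  using L
proof (induct rule: list_all2_induct)
  case Nil
  then show ?case using D by simp
next
  case (Cons C Cs ni ns)
  have so: "levi_embed Cs D \<in> SO (sum_list ns + nt)" and
    eq: "levi_embed Cs D \<in> paramodular_plus v w red (sum_list ns + nt) \<longleftrightarrow>
      list_all2 (\<lambda>C ni. C \<in> GL_O v ni) Cs ns \<and> D \<in> paramodular_plus v w red nt"
    using Cons.hyps(3) by auto
  have C: "C \<in> GL_F ni" using Cons.hyps(1) .
  have Cc: "C \<in> carrier_mat ni ni" and Ci: "invertible_mat C" using C unfolding GL_F_def by auto
  note Ci = mat_inv_props[OF Cc Ci]
  have e: "levi_embed (C # Cs) D = blockdiag3 C (levi_embed Cs D) (tau (mat_inv C))" by simp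
  have s: "sum_list (ni # ns) + nt = ni + (sum_list ns + nt)" by simp
  have SO: "levi_embed (C # Cs) D \<in> SO (sum_list (ni # ns) + nt)"
    unfolding e s by (rule SO_step[OF Cc Ci so])
  have "levi_embed (C # Cs) D \<in> paramodular_plus v w red (sum_list (ni # ns) + nt) \<longleftrightarrow>
      C \<in> GL_O v ni \<and> levi_embed Cs D \<in> paramodular_plus v w red (sum_list ns + nt)"
    unfolding e s by (rule pp_step[OF w C so])
  then show ?case using SO eq by simp
qed

theorem proposition3p5p3:
  fixes v :: "'a::field_char_0 \<Rightarrow> int" and red :: "'a \<Rightarrow> 'k::field" and w :: 'a
    and ns :: "nat list" and nt n :: nat
  assumes "nonarch_local_field v red"
    and "w \<noteq> 0" and "v w = 1"
    and "\<forall>ni\<in>set ns. 1 \<le> ni"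
    and "n = sum_list ns + nt"
  shows "levi ns nt \<inter> paramodular_plus v w red n =
         {levi_embed Cs D | Cs D. list_all2 (\<lambda>C ni. C \<in> GL_O v ni) Cs ns
                                 \<and> D \<in> paramodular_plus v w red nt}"
proof -
  interpret NA v red by (unfold_locales, rule assms(1))
  note main = levi_main[OF assms(2)]
  show ?thesis
  proof
    show "levi ns nt \<inter> paramodular_plus v w red n \<subseteq>
         {levi_embed Cs D | Cs D. list_all2 (\<lambda>C ni. C \<in> GL_O v ni) Cs ns
                                 \<and> D \<in> paramodular_plus v w red nt}"
    proof
      fix g assume g: "g \<in> levi ns nt \<inter> paramodular_plus v w red n"
      then obtain Cs D where gCD: "g = levi_embed Cs D" and L: "list_all2 (\<lambda>C ni. C \<in> GL_F ni) Cs ns"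
        and D: "D \<in> SO nt" unfolding levi_def by blast
      from g main[OF L D] gCD assms(5)
      show "g \<in> {levi_embed Cs D | Cs D. list_all2 (\<lambda>C ni. C \<in> GL_O v ni) Cs ns
                                 \<and> D \<in> paramodular_plus v w red nt}" by blast
    qed
  next
    show "{levi_embed Cs D | Cs D. list_all2 (\<lambda>C ni. C \<in> GL_O v ni) Cs ns
                                 \<and> D \<in> paramodular_plus v w red nt} \<subseteq>
          levi ns nt \<inter> paramodular_plus v w red n"
    proof
      fix g assume "g \<in> {levi_embed Cs D | Cs D. list_all2 (\<lambda>C ni. C \<in> GL_O v ni) Cs ns
                                 \<and> D \<in> paramodular_plus v w red nt}"
      then obtain Cs D where gCD: "g = levi_embed Cs D" and L: "list_all2 (\<lambda>C ni. C \<in> GL_O v ni) Cs ns"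
        and D: "D \<in> paramodular_plus v w red nt" by blast
      have L': "list_all2 (\<lambda>C ni. C \<in> GL_F ni) Cs ns"
        using L by (rule list_all2_mono, simp add: GL_O_def)
      have D': "D \<in> SO nt" using D unfolding paramodular_plus_def paramodular_def by auto
      have "g \<in> levi ns nt" unfolding levi_def gCD using L' D' by blast
      moreover have "g \<in> paramodular_plus v w red n" using main[OF L' D'] L D gCD assms(5) by blast
      ultimately show "g \<in> levi ns nt \<inter> paramodular_plus v w red n" by blast
    qed
  qed
qed

end
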